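(* Let $E$ be a field and $F$ a field extension of $E$. Let $X=(x_1,\dots,x_n)$ and let $$\sigma=\sum_{I\in\mathbb N^n}\alpha_IX^I\in F[[X]],\qquad \alpha_I\in F,$$ where $X^I=x_1^{i_1}\cdots x_n^{i_n}$ for $I=(i_1,\dots,i_n)$. For $1\le l\le n$ and $I\in\mathbb N^n$ define the one-variable series $$a_{I,l}=\sum_{j=0}^\infty \alpha_{J}x_l^j\in F[[x_l]],\qquad J=(i_1,\dots,i_{l-1},j,i_{l+1},\dots,i_n).$$ If $\sigma$ is algebraic over $E((X))$ (the fraction field of $E[[X]]$, viewed inside the fraction field of $F[[X]]$), then $a_{I,l}$ is algebraic over $E((x_l))$ for every $1\le l\le n$ and every $I\in\mathbb N^n$. *)

theory Defs
  imports "HOL-Computational_Algebra.Computational_Algebra"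
begin

text \<open>A subset E of a field (of type 'a) that is itself a subfield; the ambient
  type 'a plays the role of the extension field F.\<close>
definition is_subfield :: "'a::field set \<Rightarrow> bool" where
  "is_subfield E \<longleftrightarrow> 0 \<in> E \<and> 1 \<in> E \<and>
     (\<forall>x\<in>E. \<forall>y\<in>E. x + y \<in> E \<and> x * y \<in> E) \<and>
     (\<forall>x\<in>E. - x \<in> E \<and> inverse x \<in> E)"

text \<open>Multivariate formal power series in the n variables x_0,...,x_{n-1}:
  maps from exponent vectors to coefficients; only exponent vectors in
  exps n (support in {..<n}) are relevant.\<close>
definition exps :: "nat \<Rightarrow> (nat \<Rightarrow> nat) set" where
  "exps n = {I. \<forall>i\<ge>n. I i = 0}"

definition mps_mult ::
  "((nat \<Rightarrow> nat) \<Rightarrow> 'a::comm_ring_1) \<Rightarrow> ((nat \<Rightarrow> nat) \<Rightarrow> 'a) \<Rightarrow> (nat \<Rightarrow> nat) \<Rightarrow> 'a" where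
  "mps_mult f g = (\<lambda>I. \<Sum>J\<in>{J. \<forall>i. J i \<le> I i}. f J * g (\<lambda>i. I i - J i))"

fun mps_pow :: "((nat \<Rightarrow> nat) \<Rightarrow> 'a::comm_ring_1) \<Rightarrow> nat \<Rightarrow> (nat \<Rightarrow> nat) \<Rightarrow> 'a" where
  "mps_pow f 0 = (\<lambda>I. if I = (\<lambda>_. 0) then 1 else 0)"
| "mps_pow f (Suc k) = mps_mult f (mps_pow f k)"

text \<open>sigma in F[[x_0..x_{n-1}]] is algebraic over E((X)) = Frac(E[[X]]):
  there is a nonzero polynomial with coefficients in E((X)) annihilating sigma.
  After clearing denominators (F[[X]] is a domain) this is: there are
  c_0,...,c_d in E[[X]], not all zero, with sum_k c_k sigma^k = 0 in F[[X]].\<close>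
definition mps_algebraic_over :: "'a::field set \<Rightarrow> nat \<Rightarrow> ((nat \<Rightarrow> nat) \<Rightarrow> 'a) \<Rightarrow> bool" where
  "mps_algebraic_over E n \<sigma> \<longleftrightarrow>
     (\<exists>(c :: nat \<Rightarrow> (nat \<Rightarrow> nat) \<Rightarrow> 'a) (d :: nat).
        (\<forall>k\<le>d. \<forall>I\<in>exps n. c k I \<in> E) \<and>
        (\<exists>k\<le>d. \<exists>I\<in>exps n. c k I \<noteq> 0) \<and>
        (\<forall>I\<in>exps n. (\<Sum>k\<le>d. mps_mult (c k) (mps_pow \<sigma> k) I) = 0))"

definition fps_algebraic_over :: "'a::field set \<Rightarrow> 'a fps \<Rightarrow> bool" where
  "fps_algebraic_over E a \<longleftrightarrow>
     (\<exists>p :: 'a fls poly. p \<noteq> 0 \<and> (\<forall>k m. fls_nth (coeff p k) m \<in> E) \<and>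
        poly p (fps_to_fls a) = 0)"

end

theory Submission
  imports Defs
begin


definition sr :: "'b::comm_ring_1 set \<Rightarrow> bool" where
  "sr K \<longleftrightarrow> 0 \<in> K \<and> 1 \<in> K \<and> (\<forall>x\<in>K. \<forall>y\<in>K. x + y \<in> K \<and> x * y \<in> K) \<and> (\<forall>x\<in>K. - x \<in> K)"

lemma sr_0: "sr K \<Longrightarrow> 0 \<in> K" and sr_1: "sr K \<Longrightarrow> 1 \<in> K"
  and sr_add: "sr K \<Longrightarrow> x \<in> K \<Longrightarrow> y \<in> K \<Longrightarrow> x + y \<in> K"
  and sr_mult: "sr K \<Longrightarrow> x \<in> K \<Longrightarrow> y \<in> K \<Longrightarrow> x * y \<in> K"
  and sr_uminus: "sr K \<Longrightarrow> x \<in> K \<Longrightarrow> - x \<in> K"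
  by (auto simp: sr_def)

lemma sr_diff: "sr K \<Longrightarrow> x \<in> K \<Longrightarrow> y \<in> K \<Longrightarrow> x - y \<in> K"
  using sr_add[of K x "- y"] sr_uminus[of K y] by simp

lemma sr_sum: "sr K \<Longrightarrow> (\<And>a. a \<in> A \<Longrightarrow> f a \<in> K) \<Longrightarrow> sum f A \<in> K"
proof (induction A rule: infinite_finite_induct)
  case (infinite A) then show ?case by (simp add: sr_0)
next
  case empty then show ?case by (simp add: sr_0)
next
  case (insert x F) then show ?case by (simp add: sr_add)
qed

lemma sr_prod: "sr K \<Longrightarrow> (\<And>a. a \<in> A \<Longrightarrow> f a \<in> K) \<Longrightarrow> prod f A \<in> K"
proof (induction A rule: infinite_finite_induct)
  case (infinite A) then show ?case by (simp add: sr_1)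
next
  case empty then show ?case by (simp add: sr_1)
next
  case (insert x F) then show ?case by (simp add: sr_mult)
qed

lemma sr_power: "sr K \<Longrightarrow> x \<in> K \<Longrightarrow> x ^ k \<in> K"
  by (induction k) (auto simp: sr_1 sr_mult)

definition lspan :: "'b::comm_ring_1 set \<Rightarrow> 'b set \<Rightarrow> 'b set" where
  "lspan K S = {x. \<exists>f. (\<forall>s\<in>S. f s \<in> K) \<and> x = (\<Sum>s\<in>S. f s * s)}"

lemma lspan_0: "sr K \<Longrightarrow> 0 \<in> lspan K S"
  unfolding lspan_def by (rule CollectI, rule exI[of _ "\<lambda>_. 0"]) (simp add: sr_0)

lemma lspan_gen: "sr K \<Longrightarrow> finite S \<Longrightarrow> s \<in> S \<Longrightarrow> s \<in> lspan K S"
  unfolding lspan_def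
proof (rule CollectI, rule exI[of _ "\<lambda>t. if t = s then 1 else 0"], intro conjI)
  assume "sr K" "finite S" "s \<in> S"
  then show "\<forall>t\<in>S. (if t = s then 1 else 0) \<in> K" by (simp add: sr_0 sr_1)
  have "(\<Sum>t\<in>S. (if t = s then 1 else 0) * t) = (\<Sum>t\<in>S. if t = s then t else 0)"
    by (intro sum.cong) auto
  then show "s = (\<Sum>t\<in>S. (if t = s then 1 else 0) * t)" using \<open>finite S\<close> \<open>s \<in> S\<close> by simp
qed

lemma lspan_add: "x \<in> lspan K S \<Longrightarrow> y \<in> lspan K S \<Longrightarrow> sr K \<Longrightarrow> x + y \<in> lspan K S"
  unfolding lspan_def
proof (elim CollectE exE conjE, intro CollectI)
  fix f g assume "\<forall>s\<in>S. f s \<in> K" "x = (\<Sum>s\<in>S. f s * s)" "\<forall>s\<in>S. g s \<in> K" "y = (\<Sum>s\<in>S. g s * s)" "sr K"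
  then show "\<exists>h. (\<forall>s\<in>S. h s \<in> K) \<and> x + y = (\<Sum>s\<in>S. h s * s)"
    by (intro exI[of _ "\<lambda>s. f s + g s"]) (simp add: sr_add distrib_right sum.distrib)
qed

lemma lspan_scale: "x \<in> lspan K S \<Longrightarrow> a \<in> K \<Longrightarrow> sr K \<Longrightarrow> a * x \<in> lspan K S"
  unfolding lspan_def
proof (elim CollectE exE conjE, intro CollectI)
  fix f assume "\<forall>s\<in>S. f s \<in> K" "x = (\<Sum>s\<in>S. f s * s)" "a \<in> K" "sr K"
  then show "\<exists>h. (\<forall>s\<in>S. h s \<in> K) \<and> a * x = (\<Sum>s\<in>S. h s * s)"
    by (intro exI[of _ "\<lambda>s. a * f s"]) (simp add: sr_mult sum_distrib_left mult.assoc)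
qed

lemma lspan_uminus: "x \<in> lspan K S \<Longrightarrow> sr K \<Longrightarrow> - x \<in> lspan K S"
  using lspan_scale[of x K S "-1"] sr_uminus[OF _ sr_1] by auto

lemma lspan_diff: "x \<in> lspan K S \<Longrightarrow> y \<in> lspan K S \<Longrightarrow> sr K \<Longrightarrow> x - y \<in> lspan K S"
  using lspan_add[of x K S "- y"] lspan_uminus[of y K S] by simp

lemma lspan_sum: "sr K \<Longrightarrow> (\<And>a. a \<in> A \<Longrightarrow> f a \<in> lspan K S) \<Longrightarrow> sum f A \<in> lspan K S"
proof (induction A rule: infinite_finite_induct)
  case (infinite A) then show ?case by (simp add: lspan_0)
next
  case empty then show ?case by (simp add: lspan_0)
next
  case (insert x F) then show ?case by (simp add: lspan_add)
qed

lemma lspan_empty: "lspan K {} = {0}"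
  unfolding lspan_def by auto

lemma lspan_insert_E:
  assumes "x \<in> lspan K (insert s S)" "finite S" "s \<notin> S" "sr K"
  shows "\<exists>a\<in>K. \<exists>w\<in>lspan K S. x = a * s + w"
proof -
  obtain f where f: "\<forall>t\<in>insert s S. f t \<in> K" "x = (\<Sum>t\<in>insert s S. f t * t)"
    using assms(1) unfolding lspan_def by auto
  have "x = f s * s + (\<Sum>t\<in>S. f t * t)" using f(2) assms(2,3) by simp
  moreover have "(\<Sum>t\<in>S. f t * t) \<in> lspan K S" unfolding lspan_def using f(1) by auto
  ultimately show ?thesis using f(1) by auto
qed

lemma dep:
  fixes v :: "nat \<Rightarrow> 'b::idom"
  assumes K: "sr K" and S: "finite S"
  shows "finite I \<Longrightarrow> card S < card I \<Longrightarrow> (\<forall>i\<in>I. v i \<in> lspan K S) \<Longrightarrow>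
    \<exists>g. (\<forall>i\<in>I. g i \<in> K) \<and> (\<exists>i\<in>I. g i \<noteq> 0) \<and> (\<Sum>i\<in>I. g i * v i) = 0"
  using S
proof (induction S arbitrary: I v rule: finite_induct)
  case empty
  then obtain i0 where i0: "i0 \<in> I" by fastforce
  have v0: "\<forall>i\<in>I. v i = 0" using empty(3) by (simp add: lspan_empty)
  show ?case
    by (rule exI[of _ "\<lambda>i. if i = i0 then 1 else 0"]) (use i0 v0 K in \<open>auto simp: sr_0 sr_1\<close>)
next
  case (insert s S)
  have "\<forall>i\<in>I. \<exists>a\<in>K. \<exists>w\<in>lspan K S. v i = a * s + w"
    using insert lspan_insert_E[OF _ insert(1,2) K] by blast
  then obtain a w where aw: "\<forall>i\<in>I. a i \<in> K \<and> w i \<in> lspan K S \<and> v i = a i * s + w i"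
    by metis
  show ?case
  proof (cases "\<forall>i\<in>I. a i = 0")
    case True
    then have "\<forall>i\<in>I. v i \<in> lspan K S" using aw by auto
    moreover have "card S < card I" using insert by simp
    ultimately show ?thesis using insert.IH[OF insert(4)] by blast
  next
    case False
    then obtain j where j: "j \<in> I" "a j \<noteq> 0" by blast
    define I' where "I' = I - {j}"
    define v' where "v' i = a j * v i - a i * v j" for i
    have fin': "finite I'" using insert(4) I'_def by simp
    have card': "card S < card I'" using insert(1,2,5) j(1) I'_def by (simp add: card_Diff_singleton)
    have "\<forall>i\<in>I'. v' i \<in> lspan K S"
    proof
      fix i assume "i \<in> I'"
      then have i: "i \<in> I" using I'_def by simp
      have "v' i = a j * w i - a i * w j"
        using aw i j(1) unfolding v'_def by (simp add: algebra_simps)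
      then show "v' i \<in> lspan K S"
        using aw i j(1) K by (simp add: lspan_diff lspan_scale)
    qed
    then obtain g' where g': "\<forall>i\<in>I'. g' i \<in> K" "\<exists>i\<in>I'. g' i \<noteq> 0" "(\<Sum>i\<in>I'. g' i * v' i) = 0"
      using insert.IH[OF fin' card'] by blast
    define g where "g i = (if i = j then - (\<Sum>i\<in>I'. g' i * a i) else g' i * a j)" for i
    have jI': "j \<notin> I'" and II': "I = insert j I'" using I'_def j(1) by auto
    have "(\<Sum>i\<in>I. g i * v i) = g j * v j + (\<Sum>i\<in>I'. g i * v i)"
      using II' jI' fin' by simp
    also have "(\<Sum>i\<in>I'. g i * v i) = (\<Sum>i\<in>I'. g' i * a j * v i)"
      using jI' by (intro sum.cong) (auto simp: g_def)
    also have "0 = (\<Sum>i\<in>I'. g' i * v' i)" using g'(3) by simp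
    then have "(\<Sum>i\<in>I'. g' i * a j * v i) = (\<Sum>i\<in>I'. g' i * a i) * v j"
    proof -
      have "(\<Sum>i\<in>I'. g' i * v' i) = (\<Sum>i\<in>I'. g' i * a j * v i) - (\<Sum>i\<in>I'. g' i * a i) * v j"
        unfolding v'_def by (simp add: sum_subtractf sum_distrib_right sum_distrib_left algebra_simps)
      then show ?thesis using g'(3) by simp
    qed
    finally have sum0: "(\<Sum>i\<in>I. g i * v i) = 0" by (simp add: g_def)
    have "\<forall>i\<in>I. g i \<in> K"
      using g'(1) aw j(1) K unfolding g_def I'_def
      by (auto intro!: sr_uminus sr_sum sr_mult)
    moreover have "\<exists>i\<in>I. g i \<noteq> 0"
      using g'(2) j(2) jI' II' unfolding g_def by fastforce
    ultimately show ?thesis using sum0 by blast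
  qed
qed



definition sf :: "'b::field set \<Rightarrow> bool" where
  "sf K \<longleftrightarrow> sr K \<and> (\<forall>x\<in>K. inverse x \<in> K)"

definition good :: "'b::comm_ring_1 set \<Rightarrow> 'b set \<Rightarrow> 'b \<Rightarrow> bool" where
  "good K S z \<longleftrightarrow> (\<forall>x\<in>lspan K S. z * x \<in> lspan K S)"

definition fin :: "'b::comm_ring_1 set \<Rightarrow> 'b \<Rightarrow> bool" where
  "fin K z \<longleftrightarrow> (\<exists>S. finite S \<and> 1 \<in> lspan K S \<and> good K S z)"

definition alg :: "'b::comm_ring_1 set \<Rightarrow> 'b \<Rightarrow> bool" where
  "alg K z \<longleftrightarrow> (\<exists>p. p \<noteq> 0 \<and> (\<forall>i. coeff p i \<in> K) \<and> poly p z = 0)"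

definition pset :: "'b::comm_ring_1 set \<Rightarrow> 'b set \<Rightarrow> 'b set" where
  "pset S T = (\<lambda>(s,t). s * t) ` (S \<times> T)"

lemma good_gen:
  assumes "sr K" "finite S" "\<forall>u\<in>S. z * u \<in> lspan K S"
  shows "good K S z"
  unfolding good_def
proof
  fix x assume "x \<in> lspan K S"
  then obtain f where f: "\<forall>s\<in>S. f s \<in> K" "x = (\<Sum>s\<in>S. f s * s)" unfolding lspan_def by auto
  have "z * x = (\<Sum>s\<in>S. f s * (z * s))" using f(2) by (simp add: sum_distrib_left algebra_simps)
  also have "\<dots> \<in> lspan K S"
  proof (rule lspan_sum[OF assms(1)])
    fix s assume "s \<in> S"
    then show "f s * (z * s) \<in> lspan K S" using assms f(1) by (intro lspan_scale[of "z * s" K S "f s"]) auto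
  qed
  finally show "z * x \<in> lspan K S" .
qed

lemma good_scalar: "sr K \<Longrightarrow> a \<in> K \<Longrightarrow> good K S a"
  unfolding good_def by (auto intro: lspan_scale)

lemma good_add: "sr K \<Longrightarrow> good K S z \<Longrightarrow> good K S w \<Longrightarrow> good K S (z + w)"
  unfolding good_def by (auto simp: distrib_right intro: lspan_add)

lemma good_mult: "good K S z \<Longrightarrow> good K S w \<Longrightarrow> good K S (z * w)"
  unfolding good_def by (simp add: mult.assoc)

lemma good_uminus: "sr K \<Longrightarrow> good K S z \<Longrightarrow> good K S (- z)"
  unfolding good_def by (auto intro: lspan_uminus)

lemma good_power_in: "good K S z \<Longrightarrow> 1 \<in> lspan K S \<Longrightarrow> z ^ i \<in> lspan K S"
proof (induction i)
  case 0 then show ?case by simp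
next
  case (Suc i)
  then show ?case unfolding good_def by simp
qed

lemma fin_alg:
  fixes z :: "'b::idom"
  assumes K: "sr K" and "fin K z" shows "alg K z"
proof -
  obtain S where S: "finite S" "1 \<in> lspan K S" "good K S z" using assms(2) fin_def by blast
  define N where "N = card S"
  have "\<forall>i\<in>{..N}. z ^ i \<in> lspan K S" using good_power_in S by blast
  then obtain g where g: "\<forall>i\<in>{..N}. g i \<in> K" "\<exists>i\<in>{..N}. g i \<noteq> 0" "(\<Sum>i\<in>{..N}. g i * z ^ i) = 0"
    using dep[OF K S(1), of "{..N}" "\<lambda>i. z ^ i"] N_def by auto
  define p where "p = (\<Sum>i\<le>N. monom (g i) i)"
  have cp: "coeff p k = (if k \<le> N then g k else 0)" for k
    unfolding p_def by (simp add: coeff_sum coeff_monom)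
  have "\<forall>k. coeff p k \<in> K" using g(1) K by (simp add: cp sr_0)
  moreover have "p \<noteq> 0" using g(2) cp by (metis atMost_iff coeff_0)
  moreover have "poly p z = 0" using g(3) unfolding p_def by (simp add: poly_sum poly_monom)
  ultimately show ?thesis unfolding alg_def by blast
qed

lemma lspan_mult:
  assumes K: "sr K" and "finite S" "finite T" "x \<in> lspan K S" "y \<in> lspan K T"
  shows "x * y \<in> lspan K (pset S T)"
proof -
  obtain f where f: "\<forall>s\<in>S. f s \<in> K" "x = (\<Sum>s\<in>S. f s * s)" using assms(4) unfolding lspan_def by auto
  obtain g where g: "\<forall>t\<in>T. g t \<in> K" "y = (\<Sum>t\<in>T. g t * t)" using assms(5) unfolding lspan_def by auto
  have fin: "finite (pset S T)" unfolding pset_def using assms(2,3) by simp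
  have "x * y = (\<Sum>s\<in>S. \<Sum>t\<in>T. (f s * g t) * (s * t))"
    by (simp add: f(2) g(2) sum_product algebra_simps)
  also have "\<dots> \<in> lspan K (pset S T)"
  proof (rule lspan_sum[OF K], rule lspan_sum[OF K])
    fix s t assume "s \<in> S" "t \<in> T"
    then have "s * t \<in> lspan K (pset S T)" using fin by (intro lspan_gen[OF K]) (auto simp: pset_def)
    moreover have "f s * g t \<in> K" using f g \<open>s \<in> S\<close> \<open>t \<in> T\<close> K by (simp add: sr_mult)
    ultimately show "(f s * g t) * (s * t) \<in> lspan K (pset S T)" using lspan_scale K by blast
  qed
  finally show ?thesis .
qed

lemma one_pset: "sr K \<Longrightarrow> finite S \<Longrightarrow> finite T \<Longrightarrow> 1 \<in> lspan K S \<Longrightarrow> 1 \<in> lspan K T \<Longrightarrow> 1 \<in> lspan K (pset S T)"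
  using lspan_mult[of K S T 1 1] by simp

lemma finite_pset: "finite S \<Longrightarrow> finite T \<Longrightarrow> finite (pset S T)"
  unfolding pset_def by simp

lemma good_psetL:
  assumes K: "sr K" and "finite S" "finite T" "good K S z"
  shows "good K (pset S T) z"
proof (rule good_gen[OF K finite_pset[OF assms(2,3)]], intro ballI)
  fix u assume "u \<in> pset S T"
  then obtain s t where st: "s \<in> S" "t \<in> T" "u = s * t" unfolding pset_def by auto
  have "z * s \<in> lspan K S" using assms(4) lspan_gen[OF K assms(2) st(1)] unfolding good_def by blast
  moreover have "t \<in> lspan K T" using lspan_gen[OF K assms(3) st(2)] .
  ultimately have "(z * s) * t \<in> lspan K (pset S T)" using lspan_mult[OF K assms(2,3)] by blast
  then show "z * u \<in> lspan K (pset S T)" using st(3) by (simp add: mult.assoc)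
qed

lemma good_psetR:
  assumes K: "sr K" and "finite S" "finite T" "good K T z"
  shows "good K (pset S T) z"
proof (rule good_gen[OF K finite_pset[OF assms(2,3)]], intro ballI)
  fix u assume "u \<in> pset S T"
  then obtain s t where st: "s \<in> S" "t \<in> T" "u = s * t" unfolding pset_def by auto
  have "z * t \<in> lspan K T" using assms(4) lspan_gen[OF K assms(3) st(2)] unfolding good_def by blast
  moreover have "s \<in> lspan K S" using lspan_gen[OF K assms(2) st(1)] .
  ultimately have "s * (z * t) \<in> lspan K (pset S T)" using lspan_mult[OF K assms(2,3)] by blast
  then show "z * u \<in> lspan K (pset S T)" using st(3) by (simp add: algebra_simps)
qed

lemma fin_K: "sr K \<Longrightarrow> a \<in> K \<Longrightarrow> fin K a"
  unfolding fin_def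
  by (rule exI[of _ "{1}"]) (auto intro: good_scalar lspan_gen)

lemma fin_add: "sr K \<Longrightarrow> fin K z \<Longrightarrow> fin K w \<Longrightarrow> fin K (z + w)"
  unfolding fin_def
proof (elim exE conjE)
  fix S T assume *: "sr K" "finite S" "1 \<in> lspan K S" "good K S z" "finite T" "1 \<in> lspan K T" "good K T w"
  show "\<exists>S. finite S \<and> 1 \<in> lspan K S \<and> good K S (z + w)"
    by (rule exI[of _ "pset S T"]) (use * in \<open>auto intro: finite_pset one_pset good_add good_psetL good_psetR\<close>)
qed

lemma fin_mult: "sr K \<Longrightarrow> fin K z \<Longrightarrow> fin K w \<Longrightarrow> fin K (z * w)"
  unfolding fin_def
proof (elim exE conjE)
  fix S T assume *: "sr K" "finite S" "1 \<in> lspan K S" "good K S z" "finite T" "1 \<in> lspan K T" "good K T w"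
  show "\<exists>S. finite S \<and> 1 \<in> lspan K S \<and> good K S (z * w)"
    by (rule exI[of _ "pset S T"]) (use * in \<open>auto intro: finite_pset one_pset good_mult good_psetL good_psetR\<close>)
qed

lemma fin_uminus: "sr K \<Longrightarrow> fin K z \<Longrightarrow> fin K (- z)"
  unfolding fin_def by (auto intro: good_uminus)

lemma fin_common:
  assumes K: "sr K" shows "finite U \<Longrightarrow> \<forall>u\<in>U. fin K u \<Longrightarrow> \<exists>S. finite S \<and> 1 \<in> lspan K S \<and> (\<forall>u\<in>U. good K S u)"
proof (induction U rule: finite_induct)
  case empty
  then show ?case by (intro exI[of _ "{1}"]) (auto intro: lspan_gen[OF K])
next
  case (insert x F)
  then obtain S where S: "finite S" "1 \<in> lspan K S" "\<forall>u\<in>F. good K S u" by auto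
  obtain T where T: "finite T" "1 \<in> lspan K T" "good K T x" using insert.prems unfolding fin_def by auto
  show ?case
    by (rule exI[of _ "pset S T"]) (use S T K in \<open>auto intro: finite_pset one_pset good_psetL good_psetR\<close>)
qed

lemma good_poly: "sr K \<Longrightarrow> good K S z \<Longrightarrow> \<forall>i. coeff r i \<in> K \<Longrightarrow> good K S (poly r z)"
proof (induction r)
  case 0 then show ?case by (simp add: good_scalar sr_0)
next
  case (pCons a p)
  have a: "a \<in> K" using pCons.prems(3) by (metis coeff_pCons_0)
  have "\<forall>i. coeff p i \<in> K" using pCons.prems(3) by (metis coeff_pCons_Suc)
  then have "good K S (poly p z)" using pCons by blast
  then show ?case using pCons.prems a
    by (simp add: good_add good_scalar good_mult)
qed

lemma good_inverse:
  fixes q :: "'b::field"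
  assumes K: "sf K" and S: "finite S" "1 \<in> lspan K S" "good K S q"
  shows "good K S (inverse q)"
proof (cases "q = 0")
  case True
  then show ?thesis using K unfolding good_def sf_def by (auto intro: lspan_0)
next
  case False
  have Kr: "sr K" using K sf_def by auto
  have "alg K q" using fin_alg[OF Kr] S fin_def by blast
  then obtain p0 where "p0 \<noteq> 0 \<and> (\<forall>i. coeff p0 i \<in> K) \<and> poly p0 q = 0" unfolding alg_def by blast
  from ex_has_least_nat[of "\<lambda>p. p \<noteq> 0 \<and> (\<forall>i. coeff p i \<in> K) \<and> poly p q = 0", OF this, of degree]
  obtain p where p: "p \<noteq> 0" "\<forall>i. coeff p i \<in> K" "poly p q = 0"
    and pmin: "\<And>p'. p' \<noteq> 0 \<and> (\<forall>i. coeff p' i \<in> K) \<and> poly p' q = 0 \<Longrightarrow> degree p \<le> degree p'" by blast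
  obtain a p1 where ap: "p = pCons a p1" by (cases p) auto
  have a0: "a \<noteq> 0"
  proof
    assume "a = 0"
    then have p1: "p1 \<noteq> 0" using p(1) ap by auto
    have "\<forall>i. coeff p1 i \<in> K" using p(2) ap by (metis coeff_pCons_Suc)
    moreover have "poly p1 q = 0" using p(3) ap \<open>a = 0\<close> False by simp
    ultimately have "degree p \<le> degree p1" using pmin p1 by blast
    then show False using ap p1 by simp
  qed
  have aK: "a \<in> K" using p(2) ap by (metis coeff_pCons_0)
  have p1K: "\<forall>i. coeff p1 i \<in> K" using p(2) ap by (metis coeff_pCons_Suc)
  have "a + q * poly p1 q = 0" using p(3) ap by simp
  then have "inverse q = - inverse a * poly p1 q" using a0 False
    by (simp add: field_simps) (metis add.commute add_eq_0_iff mult.commute)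
  moreover have "good K S (- inverse a * poly p1 q)"
    using good_mult[OF good_uminus[OF Kr good_scalar[OF Kr, of "inverse a"]] good_poly[OF Kr S(3) p1K]]
      K aK unfolding sf_def by auto
  ultimately show ?thesis by simp
qed

lemma fin_root:
  fixes z :: "'b::field"
  assumes K: "sf K" and u: "u \<noteq> 0" "\<forall>i. fin K (coeff u i)" "poly u z = 0"
  shows "fin K z"
proof -
  have Kr: "sr K" using K sf_def by auto
  define e where "e = degree u"
  define lc where "lc = coeff u e"
  have lc0: "lc \<noteq> 0" using u(1) lc_def e_def by simp
  have e0: "e > 0"
  proof (rule ccontr)
    assume "\<not> 0 < e"
    then have "u = [:lc:]" using e_def lc_def by (metis degree_0_id gr0I)
    then show False using u(3) lc0 by simp
  qed
  obtain S where S: "finite S" "1 \<in> lspan K S" "\<forall>x\<in>coeff u ` {..e}. good K S x"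
    using fin_common[OF Kr, of "coeff u ` {..e}"] u(2) by auto
  have gc: "good K S (coeff u i)" if "i \<le> e" for i using S(3) that by auto
  have gi: "good K S (inverse lc)" using good_inverse[OF K S(1,2)] gc lc_def by simp
  define T where "T = (\<lambda>i. z ^ i) ` {..<e}"
  have T: "finite T" using T_def by simp
  have oneT: "1 \<in> lspan K T" using lspan_gen[OF Kr T, of 1] e0 unfolding T_def
    by (metis image_eqI lessThan_iff power_0)
  have ze: "z ^ e = (\<Sum>i<e. (- (inverse lc * coeff u i)) * z ^ i)"
  proof -
    have "0 = (\<Sum>i\<le>e. coeff u i * z ^ i)" using u(3) poly_altdef[of u z] e_def by simp
    also have "\<dots> = lc * z ^ e + (\<Sum>i<e. coeff u i * z ^ i)"
      using lc_def by (simp add: lessThan_Suc_atMost[symmetric])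
    finally have "z ^ e = - inverse lc * (\<Sum>i<e. coeff u i * z ^ i)" using lc0
      by (simp add: field_simps) (metis add.commute add_eq_0_iff)
    then show ?thesis by (simp add: sum_distrib_left algebra_simps)
  qed
  have "good K (pset S T) z"
  proof (rule good_gen[OF Kr finite_pset[OF S(1) T]], intro ballI)
    fix v assume "v \<in> pset S T"
    then obtain s i where si: "s \<in> S" "i < e" "v = s * z ^ i" unfolding pset_def T_def by auto
    have sS: "s \<in> lspan K S" using lspan_gen[OF Kr S(1) si(1)] .
    show "z * v \<in> lspan K (pset S T)"
    proof (cases "Suc i < e")
      case True
      then have "z * v \<in> pset S T" using si unfolding pset_def T_def
        by (auto intro!: image_eqI[of _ _ "(s, z ^ Suc i)"])
      then show ?thesis using lspan_gen[OF Kr finite_pset[OF S(1) T]] by blast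
    next
      case False
      then have ie: "Suc i = e" using si(2) by simp
      have "z * v = s * z ^ e" using si(3) by (simp add: ie[symmetric] algebra_simps)
      also have "\<dots> = (\<Sum>j<e. ((- (inverse lc * coeff u j)) * s) * z ^ j)"
        by (simp add: ze sum_distrib_left algebra_simps)
      also have "\<dots> \<in> lspan K (pset S T)"
      proof (intro lspan_sum[OF Kr] lspan_mult[OF Kr S(1) T])
        fix j assume j: "j \<in> {..<e}"
        have "good K S (- (inverse lc * coeff u j))"
          using gi gc[of j] j Kr by (auto intro!: good_uminus good_mult)
        then show "(- (inverse lc * coeff u j)) * s \<in> lspan K S" using sS good_def by blast
        show "z ^ j \<in> lspan K T" using j lspan_gen[OF Kr T] unfolding T_def by auto
      qed
      finally show ?thesis .
    qed
  qed
  then show ?thesis unfolding fin_def using finite_pset[OF S(1) T] one_pset[OF Kr S(1) T S(2) oneT] by blast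
qed



definition fs :: "(nat \<Rightarrow> nat) \<Rightarrow> bool" where "fs I \<longleftrightarrow> finite {i. I i \<noteq> 0}"

definition Dv :: "(nat \<Rightarrow> nat) \<Rightarrow> (nat \<Rightarrow> nat) set" where "Dv I = {J. \<forall>i. J i \<le> I i}"

lemma sigma_reindex:
  fixes F :: "(nat \<Rightarrow> nat) \<Rightarrow> (nat \<Rightarrow> nat) \<Rightarrow> 'a::comm_monoid_add"
  shows "(\<Sum>(K, J)\<in>Sigma (Dv I) Dv. F K J) = (\<Sum>(J, K)\<in>Sigma (Dv I) (\<lambda>J. Dv (\<lambda>i. I i - J i)). F (\<lambda>i. J i + K i) J)"
proof (rule sum.reindex_bij_witness[where i="\<lambda>(J, K). ((\<lambda>i. J i + K i), J)" and j="\<lambda>(K, J). (J, (\<lambda>i. K i - J i))"])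
  fix a assume "a \<in> Sigma (Dv I) Dv"
  then obtain K J where a: "a = (K, J)" "\<forall>i. K i \<le> I i" "\<forall>i. J i \<le> K i" by (auto simp: Dv_def)
  show "(case case a of (K, J) \<Rightarrow> (J, \<lambda>i. K i - J i) of (J, K) \<Rightarrow> (\<lambda>i. J i + K i, J)) = a"
    using a by (simp add: fun_eq_iff)
  show "(case a of (K, J) \<Rightarrow> (J, \<lambda>i. K i - J i)) \<in> Sigma (Dv I) (\<lambda>J. Dv (\<lambda>i. I i - J i))"
    using a by (auto simp: Dv_def intro: le_trans diff_le_mono)
  show "(case case a of (K, J) \<Rightarrow> (J, \<lambda>i. K i - J i) of (J, K) \<Rightarrow> F (\<lambda>i. J i + K i) J) = (case a of (K, J) \<Rightarrow> F K J)"
    using a by (simp add: fun_eq_iff)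
next
  fix b assume "b \<in> Sigma (Dv I) (\<lambda>J. Dv (\<lambda>i. I i - J i))"
  then obtain J K where b: "b = (J, K)" "\<forall>i. J i \<le> I i" "\<forall>i. K i \<le> I i - J i" by (auto simp: Dv_def)
  show "(case case b of (J, K) \<Rightarrow> (\<lambda>i. J i + K i, J) of (K, J) \<Rightarrow> (J, \<lambda>i. K i - J i)) = b"
    using b by (simp add: fun_eq_iff)
  show "(case b of (J, K) \<Rightarrow> (\<lambda>i. J i + K i, J)) \<in> Sigma (Dv I) Dv"
    using b by (auto simp: Dv_def) (metis le_add_diff_inverse nat_add_left_cancel_le)
qed

lemma mps_mult_Dv: "mps_mult f g I = (\<Sum>J\<in>Dv I. f J * g (\<lambda>i. I i - J i))"
  unfolding mps_mult_def Dv_def by simp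

lemma finite_Dv: assumes "fs I" shows "finite (Dv I)"
proof -
  let ?A = "{i. I i \<noteq> 0}"
  let ?B = "{..(\<Sum>i\<in>?A. I i)}"
  have finA: "finite ?A" using assms unfolding fs_def .
  have "Dv I \<subseteq> {f. \<forall>x. (x \<in> ?A \<longrightarrow> f x \<in> ?B) \<and> (x \<notin> ?A \<longrightarrow> f x = 0)}"
  proof (rule subsetI, rule CollectI, intro allI conjI impI)
    fix J x assume J: "J \<in> Dv I"
    then have Jx: "J x \<le> I x" unfolding Dv_def by blast
    { assume xA: "x \<in> ?A"
      have "I x \<le> (\<Sum>i\<in>?A. I i)" by (rule member_le_sum[OF xA _ finA]) simp
      then show "J x \<in> ?B" using Jx by simp }
    { assume "x \<notin> ?A" then show "J x = 0" using Jx by simp }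
  qed
  moreover have "finite {f. \<forall>x. (x \<in> ?A \<longrightarrow> f x \<in> ?B) \<and> (x \<notin> ?A \<longrightarrow> f x = (0::nat))}"
    using finA by (intro finite_set_of_finite_funs) auto
  ultimately show ?thesis by (rule finite_subset)
qed

lemma fs_le: "fs I \<Longrightarrow> J \<in> Dv I \<Longrightarrow> fs J"
proof -
  assume "fs I" "J \<in> Dv I"
  then have "{i. J i \<noteq> 0} \<subseteq> {i. I i \<noteq> 0}" unfolding Dv_def
    by (metis (mono_tags, lifting) Collect_mono le_zero_eq mem_Collect_eq)
  then show "fs J" using \<open>fs I\<close> unfolding fs_def by (rule finite_subset)
qed

lemma fs_diff: "fs I \<Longrightarrow> fs (\<lambda>i. I i - J i)"
proof -
  assume "fs I"
  have "{i. I i - J i \<noteq> 0} \<subseteq> {i. I i \<noteq> 0}" by auto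
  then show ?thesis using \<open>fs I\<close> unfolding fs_def by (rule finite_subset)
qed

lemma fs_add: "fs I \<Longrightarrow> fs J \<Longrightarrow> fs (\<lambda>i. I i + J i)"
proof -
  assume "fs I" "fs J"
  have "{i. I i + J i \<noteq> 0} \<subseteq> {i. I i \<noteq> 0} \<union> {i. J i \<noteq> 0}" by auto
  then show ?thesis using \<open>fs I\<close> \<open>fs J\<close> unfolding fs_def by (meson finite_UnI finite_subset)
qed

lemma fs_zero: "fs (\<lambda>_. 0)" unfolding fs_def by simp

typedef (overloaded) 'b mps = "{f :: (nat \<Rightarrow> nat) \<Rightarrow> 'b::zero. \<forall>I. \<not> fs I \<longrightarrow> f I = 0}"
  morphisms mrep mabs
  by (rule exI[of _ "\<lambda>_. 0"]) auto

setup_lifting type_definition_mps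

lemma mrep_nfs: "\<not> fs I \<Longrightarrow> mrep f I = 0"
  using mrep by auto

lemma mps_eqI: "(\<And>I. fs I \<Longrightarrow> mrep f I = mrep g I) \<Longrightarrow> f = g"
proof -
  assume *: "\<And>I. fs I \<Longrightarrow> mrep f I = mrep g I"
  have "mrep f = mrep g"
  proof
    fix I show "mrep f I = mrep g I" using * mrep_nfs[of I f] mrep_nfs[of I g] by (cases "fs I") auto
  qed
  then show "f = g" using mrep_inject by blast
qed

instantiation mps :: (comm_ring_1) comm_ring_1
begin
lift_definition zero_mps :: "'a mps" is "\<lambda>_. 0" by simp
lift_definition one_mps :: "'a mps" is "\<lambda>I. if I = (\<lambda>_. 0) then 1 else 0" using fs_zero by auto
lift_definition plus_mps :: "'a mps \<Rightarrow> 'a mps \<Rightarrow> 'a mps" is "\<lambda>f g I. f I + g I" by simp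
lift_definition minus_mps :: "'a mps \<Rightarrow> 'a mps \<Rightarrow> 'a mps" is "\<lambda>f g I. f I - g I" by simp
lift_definition uminus_mps :: "'a mps \<Rightarrow> 'a mps" is "\<lambda>f I. - f I" by simp
lift_definition times_mps :: "'a mps \<Rightarrow> 'a mps \<Rightarrow> 'a mps" is
  "\<lambda>f g I. if fs I then mps_mult f g I else 0" by simp

lemma mult_comm_aux:
  fixes f g :: "(nat \<Rightarrow> nat) \<Rightarrow> 'a"
  shows "(\<Sum>J\<in>Dv I. f J * g (\<lambda>i. I i - J i)) = (\<Sum>J\<in>Dv I. g J * f (\<lambda>i. I i - J i))"
  by (rule sum.reindex_bij_witness[where i="\<lambda>J i. I i - J i" and j="\<lambda>J i. I i - J i"])
     (auto simp: Dv_def mult.commute fun_eq_iff diff_diff_cancel)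

lemma mult_assoc_aux:
  fixes f g h :: "(nat \<Rightarrow> nat) \<Rightarrow> 'a"
  assumes I: "fs I"
  shows "(\<Sum>K\<in>Dv I. (\<Sum>J\<in>Dv K. f J * g (\<lambda>i. K i - J i)) * h (\<lambda>i. I i - K i)) =
         (\<Sum>J\<in>Dv I. f J * (\<Sum>K\<in>Dv (\<lambda>i. I i - J i). g K * h (\<lambda>i. (I i - J i) - K i)))"
proof -
  have fin1: "finite (Dv I)" using finite_Dv[OF I] .
  have fin2: "\<forall>K\<in>Dv I. finite (Dv K)" using finite_Dv fs_le[OF I] by blast
  have fin3: "\<forall>J\<in>Dv I. finite (Dv (\<lambda>i. I i - J i))" using finite_Dv fs_diff[OF I] by blast
  have "(\<Sum>K\<in>Dv I. (\<Sum>J\<in>Dv K. f J * g (\<lambda>i. K i - J i)) * h (\<lambda>i. I i - K i)) =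
        (\<Sum>(K, J)\<in>Sigma (Dv I) Dv. f J * g (\<lambda>i. K i - J i) * h (\<lambda>i. I i - K i))"
    by (subst sum.Sigma[OF fin1 fin2, symmetric]) (simp add: sum_distrib_right)
  also have "\<dots> = (\<Sum>(J, K)\<in>Sigma (Dv I) (\<lambda>J. Dv (\<lambda>i. I i - J i)).
       f J * g (\<lambda>i. (J i + K i) - J i) * h (\<lambda>i. I i - (J i + K i)))"
    by (rule sigma_reindex)
  also have "\<dots> = (\<Sum>(J, K)\<in>Sigma (Dv I) (\<lambda>J. Dv (\<lambda>i. I i - J i)). f J * (g K * h (\<lambda>i. (I i - J i) - K i)))"
    by (intro sum.cong refl) (auto simp: mult.assoc diff_diff_left)
  also have "\<dots> = (\<Sum>J\<in>Dv I. f J * (\<Sum>K\<in>Dv (\<lambda>i. I i - J i). g K * h (\<lambda>i. (I i - J i) - K i)))"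
    by (subst sum.Sigma[OF fin1 fin3, symmetric]) (simp add: sum_distrib_left)
  finally show ?thesis .
qed

instance
proof
  fix a b c :: "'a mps"
  show "a * b * c = a * (b * c)"
  proof (rule mps_eqI)
    fix I assume I: "fs I"
    have "mrep (a * b * c) I = (\<Sum>K\<in>Dv I. (\<Sum>J\<in>Dv K. mrep a J * mrep b (\<lambda>i. K i - J i)) * mrep c (\<lambda>i. I i - K i))"
      using I by (simp add: times_mps.rep_eq mps_mult_Dv fs_le cong: sum.cong)
    also have "\<dots> = (\<Sum>J\<in>Dv I. mrep a J * (\<Sum>K\<in>Dv (\<lambda>i. I i - J i). mrep b K * mrep c (\<lambda>i. (I i - J i) - K i)))"
      by (rule mult_assoc_aux[OF I])
    also have "\<dots> = mrep (a * (b * c)) I"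
      using I by (simp add: times_mps.rep_eq mps_mult_Dv fs_diff)
    finally show "mrep (a * b * c) I = mrep (a * (b * c)) I" .
  qed
  show "a * b = b * a"
    by transfer (simp add: fun_eq_iff mps_mult_Dv mult_comm_aux)
  show "1 * a = a"
  proof transfer
    fix a :: "(nat \<Rightarrow> nat) \<Rightarrow> 'a" assume a: "\<forall>I. \<not> fs I \<longrightarrow> a I = 0"
    show "(\<lambda>I. if fs I then mps_mult (\<lambda>I. if I = (\<lambda>_. 0) then 1 else 0) a I else 0) = a"
    proof
      fix I show "(if fs I then mps_mult (\<lambda>I. if I = (\<lambda>_. 0) then 1 else 0) a I else 0) = a I"
      proof (cases "fs I")
        case True
        have "mps_mult (\<lambda>I. if I = (\<lambda>_. 0) then 1 else 0) a I =
              (\<Sum>J\<in>Dv I. if J = (\<lambda>_. 0) then a (\<lambda>i. I i - J i) else 0)"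
          unfolding mps_mult_Dv by (intro sum.cong) auto
        also have "\<dots> = a I" using finite_Dv[OF True] by (simp add: Dv_def)
        finally show ?thesis using True by simp
      qed (use a in simp)
    qed
  qed
  show "(a + b) * c = a * c + b * c"
    by transfer (simp add: fun_eq_iff mps_mult_Dv distrib_right sum.distrib)
  show "(0::'a mps) \<noteq> 1"
    by transfer (metis zero_neq_one)
  show "a + b + c = a + (b + c)" by transfer (simp add: add.assoc)
  show "a + b = b + a" by transfer (simp add: add.commute)
  show "0 + a = a" by transfer simp
  show "- a + a = 0" by transfer simp
  show "a - b = a + - b" by transfer simp
qed
end

lemma mrep_add: "mrep (f + g) I = mrep f I + mrep g I" by transfer simp
lemma mrep_uminus: "mrep (- f) I = - mrep f I" by transfer simp
lemma mrep_diff: "mrep (f - g) I = mrep f I - mrep g I" by transfer simp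
lemma mrep_zero: "mrep 0 I = 0" by transfer simp
lemma mrep_one: "mrep 1 I = (if I = (\<lambda>_. 0) then 1 else 0)" by transfer simp
lemma mrep_mult: "mrep (f * g) I = (if fs I then (\<Sum>J\<in>Dv I. mrep f J * mrep g (\<lambda>i. I i - J i)) else 0)"
  by transfer (simp add: mps_mult_Dv)
lemma mrep_sum: "mrep (sum F A) I = (\<Sum>a\<in>A. mrep (F a) I)"
  by (induction A rule: infinite_finite_induct) (auto simp: mrep_zero mrep_add)

lemma mrep_power: "fs I \<Longrightarrow> mrep (x ^ k) I = mps_pow (mrep x) k I"
proof (induction k arbitrary: I)
  case 0 then show ?case by (simp add: mrep_one)
next
  case (Suc k)
  then show ?case
    by (simp add: mrep_mult mps_mult_Dv fs_diff)
qed



definition Om :: "nat \<Rightarrow> nat \<Rightarrow> (nat \<Rightarrow> nat) set" where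
  "Om n l = {M. \<forall>i. (n \<le> i \<or> i = l) \<longrightarrow> M i = 0}"

definition lt :: "nat \<Rightarrow> (nat \<Rightarrow> nat) \<Rightarrow> (nat \<Rightarrow> nat) \<Rightarrow> bool" where
  "lt n M M' \<longleftrightarrow> (\<exists>k<n. M k < M' k \<and> (\<forall>i. k < i \<and> i < n \<longrightarrow> M i = M' i))"

definition le :: "nat \<Rightarrow> (nat \<Rightarrow> nat) \<Rightarrow> (nat \<Rightarrow> nat) \<Rightarrow> bool" where
  "le n M M' \<longleftrightarrow> M = M' \<or> lt n M M'"

definition padd :: "(nat \<Rightarrow> nat) \<Rightarrow> (nat \<Rightarrow> nat) \<Rightarrow> (nat \<Rightarrow> nat)" where
  "padd a b = (\<lambda>i. a i + b i)"

lemma Om_fs: "M \<in> Om n l \<Longrightarrow> fs M"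
  unfolding Om_def fs_def by (rule finite_subset[of _ "{..<n}"]) (auto simp: not_less[symmetric])

lemma lt_irrefl: "\<not> lt n M M" unfolding lt_def by auto

lemma lt_trans: assumes "lt n a b" "lt n b c" shows "lt n a c"
proof -
  obtain k1 where k1: "k1 < n" "a k1 < b k1" "\<forall>i. k1 < i \<and> i < n \<longrightarrow> a i = b i" using assms(1) lt_def by blast
  obtain k2 where k2: "k2 < n" "b k2 < c k2" "\<forall>i. k2 < i \<and> i < n \<longrightarrow> b i = c i" using assms(2) lt_def by blast
  show ?thesis unfolding lt_def
  proof (cases k1 k2 rule: linorder_cases)
    case less then show "\<exists>k<n. a k < c k \<and> (\<forall>i. k < i \<and> i < n \<longrightarrow> a i = c i)"
      using k1 k2 by (intro exI[of _ k2]) auto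
  next
    case equal then show "\<exists>k<n. a k < c k \<and> (\<forall>i. k < i \<and> i < n \<longrightarrow> a i = c i)"
      using k1 k2 by (intro exI[of _ k2]) auto
  next
    case greater then show "\<exists>k<n. a k < c k \<and> (\<forall>i. k < i \<and> i < n \<longrightarrow> a i = c i)"
      using k1 k2 by (intro exI[of _ k1]) auto
  qed
qed

lemma lt_addR: "lt n a b \<Longrightarrow> lt n (padd a c) (padd b c)"
  unfolding lt_def padd_def by auto

lemma lt_addL: "lt n a b \<Longrightarrow> lt n (padd c a) (padd c b)"
  unfolding lt_def padd_def by auto

lemma le_lt_trans: "le n a b \<Longrightarrow> lt n b c \<Longrightarrow> lt n a c"
  unfolding le_def using lt_trans by blast

lemma lt_le_trans: "lt n a b \<Longrightarrow> le n b c \<Longrightarrow> lt n a c"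
  unfolding le_def using lt_trans by blast

lemma lt_le_add: "lt n a a' \<Longrightarrow> le n b b' \<Longrightarrow> lt n (padd a b) (padd a' b')"
  using lt_addR[of n a a' b] lt_addL[of n b b' a'] unfolding le_def using lt_trans by blast

lemma le_lt_add: "le n a a' \<Longrightarrow> lt n b b' \<Longrightarrow> lt n (padd a b) (padd a' b')"
  using lt_le_add[of n b b' a a'] by (simp add: padd_def add.commute)

lemma le_add: "le n a a' \<Longrightarrow> le n b b' \<Longrightarrow> le n (padd a b) (padd a' b')"
  using lt_le_add[of n a a' b b'] le_lt_add[of n a a' b b'] unfolding le_def by blast

lemma lt_total:
  assumes "M \<in> Om n l" "M' \<in> Om n l" "M \<noteq> M'"
  shows "lt n M M' \<or> lt n M' M"
proof -
  let ?D = "{i. i < n \<and> M i \<noteq> M' i}"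
  have "?D \<noteq> {}"
  proof
    assume "?D = {}"
    then have "M i = M' i" for i using assms(1,2) unfolding Om_def by (cases "i < n") auto
    then show False using assms(3) by auto
  qed
  moreover have fD: "finite ?D" by simp
  ultimately have k0: "Max ?D \<in> ?D" by (intro Max_in)
  have kmax: "\<And>i. i \<in> ?D \<Longrightarrow> i \<le> Max ?D" using fD by (intro Max_ge)
  define k where "k = Max ?D"
  have k: "k < n" "M k \<noteq> M' k" using k0 unfolding k_def by auto
  have above: "\<forall>i. k < i \<and> i < n \<longrightarrow> M i = M' i"
  proof (intro allI impI)
    fix i assume "k < i \<and> i < n"
    then show "M i = M' i" using kmax[of i] unfolding k_def by (metis (mono_tags, lifting) leD mem_Collect_eq)
  qed
  show ?thesis
  proof (cases "M k < M' k")
    case True then show ?thesis unfolding lt_def using k above by blast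
  next
    case False then have "M' k < M k" using k by auto
    then show ?thesis unfolding lt_def using k above by (metis (mono_tags, lifting))
  qed
qed

lemma lt_lex: "lt n M M' \<Longrightarrow> (map M (rev [0..<n]), map M' (rev [0..<n])) \<in> lex {(x, y). x < y}"
proof -
  assume "lt n M M'"
  then obtain k where k: "k < n" "M k < M' k" "\<forall>i. k < i \<and> i < n \<longrightarrow> M i = M' i" unfolding lt_def by blast
  have "[0..<k + (n - k)] = [0..<k] @ [k..<k + (n - k)]" by (rule upt_add_eq_append) simp
  then have "[0..<n] = [0..<k] @ [k..<n]" using k(1) by simp
  also have "[k..<n] = k # [Suc k..<n]" using k(1) by (rule upt_conv_Cons)
  finally have r: "rev [0..<n] = rev [Suc k..<n] @ k # rev [0..<k]" by simp
  have m: "map M (rev [Suc k..<n]) = map M' (rev [Suc k..<n])" using k(3) by auto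
  have "map M (rev [0..<n]) = map M (rev [Suc k..<n]) @ M k # map M (rev [0..<k])" using r by simp
  moreover have "map M' (rev [0..<n]) = map M (rev [Suc k..<n]) @ M' k # map M' (rev [0..<k])" using r m by simp
  ultimately show ?thesis unfolding lex_conv using k(2) by auto
qed

lemma wf_lt: "wf {(M, M'). lt n M M'}"
proof -
  have "{(M, M'). lt n M M'} \<subseteq> inv_image (lex {(x, y). x < y}) (\<lambda>M. map M (rev [0..<n]))"
    using lt_lex by auto
  moreover have "wf (inv_image (lex {(x::nat, y). x < y}) (\<lambda>M. map M (rev [0..<n])))"
    by (intro wf_inv_image wf_lex wf_less)
  ultimately show ?thesis using wf_subset by blast
qed

lemma min_exists:
  assumes "X \<noteq> {}" "X \<subseteq> Om n l"
  shows "\<exists>a\<in>X. \<forall>y\<in>X. le n a y"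
proof -
  obtain a where a: "a \<in> X" "\<And>y. (y, a) \<in> {(M, M'). lt n M M'} \<Longrightarrow> y \<notin> X"
    using wfE_min[OF wf_lt, of _ X] assms(1) by blast
  have "\<forall>y\<in>X. le n a y"
  proof
    fix y assume y: "y \<in> X"
    show "le n a y"
    proof (cases "y = a")
      case True then show ?thesis unfolding le_def by simp
    next
      case False
      then have "lt n a y \<or> lt n y a" using lt_total[of a n l y] assms(2) a(1) y by blast
      then show ?thesis using a(2) y unfolding le_def by blast
    qed
  qed
  then show ?thesis using a(1) by blast
qed

definition suppO :: "nat \<Rightarrow> nat \<Rightarrow> 'b::comm_ring_1 mps \<Rightarrow> bool" where
  "suppO n l f \<longleftrightarrow> (\<forall>M. M \<notin> Om n l \<longrightarrow> mrep f M = 0)"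

definition st :: "nat \<Rightarrow> nat \<Rightarrow> 'b::comm_ring_1 mps \<Rightarrow> (nat \<Rightarrow> nat) \<Rightarrow> bool" where
  "st n l f a \<longleftrightarrow> a \<in> Om n l \<and> suppO n l f \<and> (\<forall>N. mrep f N \<noteq> 0 \<longrightarrow> le n a N)"

lemma Dv_padd: "J \<in> Dv N \<Longrightarrow> padd J (\<lambda>i. N i - J i) = N"
  unfolding Dv_def padd_def by auto

lemma suppO_mult: "suppO n l f \<Longrightarrow> suppO n l g \<Longrightarrow> suppO n l (f * g)"
  unfolding suppO_def
proof (intro allI impI)
  fix M assume f: "\<forall>M. M \<notin> Om n l \<longrightarrow> mrep f M = 0" and g: "\<forall>M. M \<notin> Om n l \<longrightarrow> mrep g M = 0"
    and M: "M \<notin> Om n l"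
  obtain i where i: "n \<le> i \<or> i = l" "M i \<noteq> 0" using M unfolding Om_def by auto
  have "mrep f J * mrep g (\<lambda>i. M i - J i) = 0" if "J \<in> Dv M" for J
  proof (cases "J i = 0")
    case True
    then have "(\<lambda>i. M i - J i) \<notin> Om n l" using i unfolding Om_def by auto
    then show ?thesis using g by simp
  next
    case False
    then have "J \<notin> Om n l" using i unfolding Om_def by auto
    then show ?thesis using f by simp
  qed
  then show "mrep (f * g) M = 0" by (simp add: mrep_mult)
qed

lemma st_mult:
  assumes f: "st n l f a" and g: "st n l g b"
  shows "st n l (f * g) (padd a b) \<and> mrep (f * g) (padd a b) = mrep f a * mrep g b"
proof
  have aO: "a \<in> Om n l" and bO: "b \<in> Om n l" using f g st_def by auto
  have sf: "suppO n l f" and sg: "suppO n l g" using f g st_def by auto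
  have fa: "\<And>N. mrep f N \<noteq> 0 \<Longrightarrow> le n a N" using f unfolding st_def by blast
  have gb: "\<And>N. mrep g N \<noteq> 0 \<Longrightarrow> le n b N" using g unfolding st_def by blast
  have abO: "padd a b \<in> Om n l" using aO bO unfolding Om_def padd_def by auto
  have "le n (padd a b) N" if N: "mrep (f * g) N \<noteq> 0" for N
  proof -
    have fsN: "fs N" using N mrep_nfs by blast
    have "(\<Sum>J\<in>Dv N. mrep f J * mrep g (\<lambda>i. N i - J i)) \<noteq> 0" using N fsN by (simp add: mrep_mult)
    then obtain J where J0: "J \<in> Dv N" "mrep f J * mrep g (\<lambda>i. N i - J i) \<noteq> 0"
      using sum.not_neutral_contains_not_neutral by blast
    then have J: "J \<in> Dv N" "mrep f J \<noteq> 0" "mrep g (\<lambda>i. N i - J i) \<noteq> 0" by auto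
    have "le n (padd a b) (padd J (\<lambda>i. N i - J i))" using fa[OF J(2)] gb[OF J(3)] by (rule le_add)
    then show ?thesis using Dv_padd[OF J(1)] by simp
  qed
  then show "st n l (f * g) (padd a b)" unfolding st_def using abO suppO_mult[OF sf sg] by blast
  have fsab: "fs (padd a b)" using abO Om_fs by blast
  have "mrep f J * mrep g (\<lambda>i. padd a b i - J i) = (if J = a then mrep f a * mrep g b else 0)"
    if J: "J \<in> Dv (padd a b)" for J
  proof (cases "J = a")
    case True
    then show ?thesis by (simp add: padd_def)
  next
    case False
    show ?thesis
    proof (rule ccontr)
      assume "\<not> ?thesis"
      then have nz: "mrep f J \<noteq> 0" "mrep g (\<lambda>i. padd a b i - J i) \<noteq> 0" using False by auto
      have "lt n a J" using fa[OF nz(1)] False unfolding le_def by auto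
      then have "lt n (padd a b) (padd J (\<lambda>i. padd a b i - J i))" using gb[OF nz(2)] by (rule lt_le_add)
      then show False using Dv_padd[OF J] lt_irrefl by metis
    qed
  qed
  moreover have "a \<in> Dv (padd a b)" unfolding Dv_def padd_def by auto
  ultimately have "(\<Sum>J\<in>Dv (padd a b). mrep f J * mrep g (\<lambda>i. padd a b i - J i)) = mrep f a * mrep g b"
    using finite_Dv[OF fsab] by (simp add: sum.delta)
  then show "mrep (f * g) (padd a b) = mrep f a * mrep g b"
    using fsab by (simp add: mrep_mult)
qed

definition smul :: "nat \<Rightarrow> (nat \<Rightarrow> nat) \<Rightarrow> (nat \<Rightarrow> nat)" where
  "smul k M = (\<lambda>i. k * M i)"

lemma st_one: "st n l (1 :: 'b::comm_ring_1 mps) (\<lambda>_. 0)"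
proof -
  have z: "(\<lambda>_. 0) \<in> Om n l" unfolding Om_def by simp
  have "suppO n l (1 :: 'b mps)" unfolding suppO_def
  proof (intro allI impI)
    fix M assume "M \<notin> Om n l"
    then have "M \<noteq> (\<lambda>_. 0)" using z by blast
    then show "mrep (1 :: 'b mps) M = 0" by (simp add: mrep_one)
  qed
  moreover have "\<forall>N. mrep (1 :: 'b mps) N \<noteq> 0 \<longrightarrow> le n (\<lambda>_. 0) N"
    unfolding le_def by (simp add: mrep_one)
  ultimately show ?thesis unfolding st_def using z by blast
qed

lemma st_power:
  fixes T :: "'b::comm_ring_1 mps"
  assumes "st n l T M"
  shows "st n l (T ^ k) (smul k M) \<and> mrep (T ^ k) (smul k M) = mrep T M ^ k"
proof (induction k)
  case 0
  have "smul 0 M = (\<lambda>_. 0)" unfolding smul_def by simp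
  then show ?case using st_one by (simp add: mrep_one)
next
  case (Suc k)
  have e: "padd M (smul k M) = smul (Suc k) M" unfolding padd_def smul_def by auto
  have AB: "st n l (T * T ^ k) (padd M (smul k M)) \<and> mrep (T * T ^ k) (padd M (smul k M)) = mrep T M * mrep (T ^ k) (smul k M)"
    by (rule st_mult[OF assms Suc[THEN conjunct1]])
  have "st n l (T * T ^ k) (smul (Suc k) M) \<and> mrep (T * T ^ k) (smul (Suc k) M) = mrep T M * mrep T M ^ k"
    using AB Suc[THEN conjunct2] unfolding e by simp
  then show ?case by (simp only: power_Suc)
qed

lemma nonzero_mrep: "f \<noteq> 0 \<Longrightarrow> \<exists>N. mrep f N \<noteq> 0"
proof (rule ccontr)
  assume "f \<noteq> 0" "\<nexists>N. mrep f N \<noteq> 0"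
  then have "f = 0" by (intro mps_eqI) (simp add: mrep_zero)
  then show False using \<open>f \<noteq> 0\<close> by simp
qed

lemma st_exists:
  assumes "f \<noteq> 0" "suppO n l f"
  shows "\<exists>a. st n l f a \<and> mrep f a \<noteq> 0"
proof -
  define X where "X = {N. mrep f N \<noteq> 0}"
  obtain N0 where "mrep f N0 \<noteq> 0" using nonzero_mrep[OF assms(1)] by blast
  then have ne: "X \<noteq> {}" unfolding X_def by blast
  have sub: "X \<subseteq> Om n l" using assms(2) unfolding suppO_def X_def by blast
  obtain a where a: "a \<in> X" "\<forall>y\<in>X. le n a y" using min_exists[OF ne sub] by blast
  have "a \<in> Om n l" using a(1) sub by blast
  moreover have "\<forall>N. mrep f N \<noteq> 0 \<longrightarrow> le n a N" using a(2) unfolding X_def by blast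
  moreover have "mrep f a \<noteq> 0" using a(1) unfolding X_def by blast
  ultimately show ?thesis unfolding st_def using assms(2) by blast
qed



lemma init:
  fixes T :: "'b::field mps" and Q :: "'b mps poly"
  assumes R: "sr R" and T: "st n l T M" and Q: "Q \<noteq> 0" "\<forall>i. suppO n l (coeff Q i)"
    "\<forall>i N. mrep (coeff Q i) N \<in> R" and z: "poly Q T = 0"
  shows "\<exists>r. r \<noteq> 0 \<and> (\<forall>i. coeff r i \<in> R) \<and> poly r (mrep T M) = 0"
proof -
  define D where "D = degree Q"
  define IS where "IS = {i. i \<le> D \<and> coeff Q i \<noteq> 0}"
  have DIS: "D \<in> IS" unfolding IS_def D_def using Q(1) by simp
  have finIS: "finite IS" unfolding IS_def by simp
  have "\<forall>i\<in>IS. \<exists>a. st n l (coeff Q i) a \<and> mrep (coeff Q i) a \<noteq> 0"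
    using st_exists Q(2) unfolding IS_def by blast
  then obtain m where m: "\<And>i. i \<in> IS \<Longrightarrow> st n l (coeff Q i) (m i) \<and> mrep (coeff Q i) (m i) \<noteq> 0"
    by metis
  define e where "e i = padd (m i) (smul i M)" for i
  define c where "c i = mrep (coeff Q i) (m i)" for i
  define t where "t = mrep T M"
  have est: "st n l (coeff Q i * T ^ i) (e i) \<and> mrep (coeff Q i * T ^ i) (e i) = c i * t ^ i"
    if i: "i \<in> IS" for i
  proof -
    have p: "st n l (T ^ i) (smul i M) \<and> mrep (T ^ i) (smul i M) = mrep T M ^ i" using st_power[OF T] .
    show ?thesis using st_mult[OF m[OF i, THEN conjunct1] p[THEN conjunct1]] p[THEN conjunct2]
      unfolding e_def c_def t_def by simp
  qed
  define X where "X = e ` IS"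
  have Xne: "X \<noteq> {}" using DIS X_def by blast
  have Xsub: "X \<subseteq> Om n l"
  proof
    fix x assume "x \<in> X"
    then obtain i where "i \<in> IS" "x = e i" unfolding X_def by blast
    then show "x \<in> Om n l" using est[of i] unfolding st_def by blast
  qed
  obtain mu where mu: "mu \<in> X" "\<forall>y\<in>X. le n mu y" using min_exists[OF Xne Xsub] by blast
  define J0 where "J0 = {i\<in>IS. e i = mu}"
  have finJ0: "finite J0" using finIS J0_def by simp
  have J0sub: "J0 \<subseteq> {..D}" unfolding J0_def IS_def by auto
  define r where "r = (\<Sum>i\<in>J0. monom (c i) i)"
  have cr: "coeff r k = (if k \<in> J0 then c k else 0)" for k
  proof -
    have "coeff r k = (\<Sum>i\<in>J0. if i = k then c i else 0)"
      unfolding r_def by (simp add: coeff_sum coeff_monom)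
    also have "\<dots> = (if k \<in> J0 then c k else 0)" using finJ0 by (simp add: sum.delta')
    finally show ?thesis .
  qed
  have "r \<noteq> 0"
  proof -
    obtain i0 where i0: "i0 \<in> IS" "mu = e i0" using mu(1) X_def by blast
    then have "i0 \<in> J0" unfolding J0_def by simp
    moreover have "c i0 \<noteq> 0" using m[OF i0(1)] c_def by simp
    ultimately have "coeff r i0 \<noteq> 0" using cr by simp
    then show ?thesis by auto
  qed
  moreover have "\<forall>i. coeff r i \<in> R" using cr Q(3) R c_def by (simp add: sr_0)
  moreover have "poly r t = 0"
  proof -
    have trm: "mrep (coeff Q i * T ^ i) mu = (if i \<in> J0 then c i * t ^ i else 0)" if i: "i \<le> D" for i
    proof (cases "coeff Q i = 0")
      case True
      then have "i \<notin> J0" unfolding J0_def IS_def by simp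
      then show ?thesis using True by (simp add: mrep_zero)
    next
      case False
      then have iIS: "i \<in> IS" unfolding IS_def using i by simp
      show ?thesis
      proof (cases "e i = mu")
        case True
        then have "i \<in> J0" using iIS J0_def by simp
        then show ?thesis using est[OF iIS] True by simp
      next
        case False
        then have "i \<notin> J0" unfolding J0_def by simp
        have "e i \<in> X" using iIS X_def by blast
        then have "lt n mu (e i)" using mu(2) False unfolding le_def by metis
        have "mrep (coeff Q i * T ^ i) mu = 0"
        proof (rule ccontr)
          assume "mrep (coeff Q i * T ^ i) mu \<noteq> 0"
          then have "le n (e i) mu" using est[OF iIS] unfolding st_def by blast
          then show False using \<open>lt n mu (e i)\<close> lt_irrefl lt_le_trans by blast
        qed
        then show ?thesis using \<open>i \<notin> J0\<close> by simp
      qed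
    qed
    have "0 = mrep (poly Q T) mu" using z by (simp add: mrep_zero)
    also have "\<dots> = (\<Sum>i\<le>D. mrep (coeff Q i * T ^ i) mu)"
      unfolding poly_altdef D_def by (simp add: mrep_sum)
    also have "\<dots> = (\<Sum>i\<le>D. if i \<in> J0 then c i * t ^ i else 0)"
      using trm by (intro sum.cong) auto
    also have "\<dots> = (\<Sum>i\<in>J0. c i * t ^ i)"
      using J0sub by (intro sum.mono_neutral_cong_right) auto
    also have "\<dots> = poly r t" unfolding r_def by (simp add: poly_sum poly_monom)
    finally show ?thesis by simp
  qed
  ultimately show ?thesis unfolding t_def by blast
qed

definition rc :: "'b::comm_ring_1 set \<Rightarrow> bool" where
  "rc R \<longleftrightarrow> (\<forall>p z. p \<noteq> 0 \<and> (\<forall>i. coeff p i \<in> R) \<and> poly p z = 0 \<longrightarrow> z \<in> R)"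

definition Rm :: "nat \<Rightarrow> nat \<Rightarrow> 'b::comm_ring_1 set \<Rightarrow> 'b mps set" where
  "Rm n l R = {f. suppO n l f \<and> (\<forall>N. mrep f N \<in> R)}"

lemma sr_Rm: assumes R: "sr R" shows "sr (Rm n l R)"
  unfolding sr_def
proof (intro conjI ballI)
  show "0 \<in> Rm n l R" unfolding Rm_def suppO_def by (simp add: mrep_zero sr_0[OF R])
  show "1 \<in> Rm n l R"
  proof -
    have "suppO n l (1::'a mps)" using st_one[of n l] unfolding st_def by blast
    moreover have "mrep (1::'a mps) N \<in> R" for N by (simp add: mrep_one sr_0[OF R] sr_1[OF R])
    ultimately show ?thesis unfolding Rm_def by blast
  qed
  fix x y assume x: "x \<in> Rm n l R" and y: "y \<in> Rm n l R"
  show "x + y \<in> Rm n l R" using x y R unfolding Rm_def suppO_def by (simp add: mrep_add sr_add)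
  show "x * y \<in> Rm n l R"
  proof -
    have "suppO n l (x * y)" using x y unfolding Rm_def by (simp add: suppO_mult)
    moreover have "mrep (x * y) N \<in> R" for N
      using x y R unfolding Rm_def by (simp add: mrep_mult sr_0 sr_sum sr_mult)
    ultimately show ?thesis unfolding Rm_def by blast
  qed
next
  fix x assume x: "x \<in> Rm n l R"
  show "- x \<in> Rm n l R" using x R unfolding Rm_def suppO_def by (simp add: mrep_uminus sr_uminus)
qed

lemma coeffs_add: "sr A \<Longrightarrow> \<forall>i. coeff p i \<in> A \<Longrightarrow> \<forall>i. coeff q i \<in> A \<Longrightarrow> \<forall>i. coeff (p + q) i \<in> A"
  by (simp add: sr_add)

lemma coeffs_mult: "sr A \<Longrightarrow> \<forall>i. coeff p i \<in> A \<Longrightarrow> \<forall>i. coeff q i \<in> A \<Longrightarrow> \<forall>i. coeff (p * q) i \<in> A"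
  by (simp add: coeff_mult sr_sum sr_mult)

lemma coeffs_const: "sr A \<Longrightarrow> a \<in> A \<Longrightarrow> \<forall>i. coeff [:a:] i \<in> A"
  by (simp add: coeff_pCons sr_0 split: nat.split)

lemma coeffs_pcompose:
  assumes A: "sr A" shows "\<forall>i. coeff p i \<in> A \<Longrightarrow> \<forall>i. coeff q i \<in> A \<Longrightarrow> \<forall>i. coeff (pcompose p q) i \<in> A"
proof (induction p)
  case 0 then show ?case by (simp add: sr_0[OF A])
next
  case (pCons a p)
  have a: "a \<in> A" using pCons.prems(1) by (metis coeff_pCons_0)
  have "\<forall>i. coeff p i \<in> A" using pCons.prems(1) by (metis coeff_pCons_Suc)
  then have "\<forall>i. coeff (pcompose p q) i \<in> A" using pCons by blast
  then show ?case unfolding pcompose_pCons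
    by (intro coeffs_add[OF A] coeffs_const[OF A a] coeffs_mult[OF A] pCons.prems(2))
qed

lift_definition trunc :: "nat \<Rightarrow> (nat \<Rightarrow> nat) \<Rightarrow> 'b::comm_ring_1 mps \<Rightarrow> 'b mps"
  is "\<lambda>n M f N. if lt n N M then f N else 0" by simp

lemma tower:
  fixes S :: "'b::field mps" and P :: "'b mps poly"
  assumes R: "sr R" "rc R" and P: "P \<noteq> 0" "\<forall>i. coeff P i \<in> Rm n l R"
    and S: "suppO n l S" "poly P S = 0"
  shows "mrep S M \<in> R"
  using wf_lt[of n]
proof (induction M rule: wf_induct_rule)
  case (less M)
  show ?case
  proof (cases "M \<in> Om n l")
    case False
    then show ?thesis using S(1) R(1) unfolding suppO_def by (simp add: sr_0)
  next
    case MO: True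
    define Pi where "Pi = trunc n M S"
    define T where "T = S - Pi"
    have mPi: "mrep Pi N = (if lt n N M then mrep S N else 0)" for N
      unfolding Pi_def by transfer simp
    have mT: "mrep T N = (if lt n N M then 0 else mrep S N)" for N
      unfolding T_def by (simp add: mrep_diff mPi)
    have PiR: "Pi \<in> Rm n l R"
    proof -
      have "suppO n l Pi" using S(1) unfolding suppO_def by (simp add: mPi)
      moreover have "mrep Pi N \<in> R" for N using less R(1) by (simp add: mPi sr_0)
      ultimately show ?thesis unfolding Rm_def by blast
    qed
    have sT: "suppO n l T" using S(1) unfolding suppO_def by (simp add: mT)
    have stT: "st n l T M"
      unfolding st_def
    proof (intro conjI allI impI)
      show "M \<in> Om n l" by (rule MO)
      show "suppO n l T" by (rule sT)
      fix N assume N: "mrep T N \<noteq> 0"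
      then have nlt: "\<not> lt n N M" and nz: "mrep S N \<noteq> 0" by (auto simp: mT split: if_splits)
      then have "N \<in> Om n l" using S(1) unfolding suppO_def by blast
      then show "le n M N" using lt_total[OF MO, of N] nlt unfolding le_def by blast
    qed
    have TM: "mrep T M = mrep S M" using lt_irrefl[of n M] by (simp add: mT)
    define Q where "Q = pcompose P [:Pi, 1:]"
    have "poly Q T = poly P (Pi + T)" unfolding Q_def by (simp add: poly_pcompose)
    also have "Pi + T = S" unfolding T_def by simp
    finally have zQ: "poly Q T = 0" using S(2) by simp
    have "Q \<noteq> 0"
    proof
      assume "Q = 0"
      have "pcompose [:Pi, 1:] [:- Pi, 1:] = [:0, 1:]" by (simp add: pcompose_pCons)
      then have "pcompose Q [:- Pi, 1:] = P" unfolding Q_def by (simp add: pcompose_assoc[symmetric])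
      then show False using \<open>Q = 0\<close> P(1) by simp
    qed
    moreover have QR: "\<forall>i. coeff Q i \<in> Rm n l R" unfolding Q_def
    proof (rule coeffs_pcompose[OF sr_Rm[OF R(1)] P(2)])
      show "\<forall>i. coeff [:Pi, 1:] i \<in> Rm n l R"
        using PiR sr_1[OF sr_Rm[OF R(1)]] sr_0[OF sr_Rm[OF R(1)]]
        by (simp add: coeff_pCons split: nat.split)
    qed
    ultimately obtain r where r: "r \<noteq> 0" "\<forall>i. coeff r i \<in> R" "poly r (mrep T M) = 0"
      using init[OF R(1) stT, of Q] zQ unfolding Rm_def by blast
    then have "mrep T M \<in> R" using R(2) unfolding rc_def by blast
    then show ?thesis using TM by simp
  qed
qed



lemma slice_reindex:
  fixes F :: "(nat \<Rightarrow> nat) \<Rightarrow> 'a::comm_monoid_add"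
  assumes Ml: "M l = 0"
  shows "(\<Sum>J'\<in>Dv (M(l := j)). F J') = (\<Sum>(J, a)\<in>Sigma (Dv M) (\<lambda>_. {0..j}). F (J(l := a)))"
proof (rule sum.reindex_bij_witness[where i="\<lambda>(J, a). J(l := a)" and j="\<lambda>J'. (J'(l := 0), J' l)"])
  fix J' assume J': "J' \<in> Dv (M(l := j))"
  then have le: "\<And>i. J' i \<le> (M(l := j)) i" unfolding Dv_def by blast
  show "(case (J'(l := 0), J' l) of (J, a) \<Rightarrow> J(l := a)) = J'" by simp
  have "J'(l := 0) \<in> Dv M" unfolding Dv_def
  proof (intro CollectI allI)
    fix i show "(J'(l := 0)) i \<le> M i" using le[of i] by (cases "i = l") auto
  qed
  moreover have "J' l \<in> {0..j}" using le[of l] by simp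
  ultimately show "(J'(l := 0), J' l) \<in> Sigma (Dv M) (\<lambda>_. {0..j})" by blast
  show "(case (J'(l := 0), J' l) of (J, a) \<Rightarrow> F (J(l := a))) = F J'" by simp
next
  fix b assume b: "b \<in> Sigma (Dv M) (\<lambda>_. {0..j})"
  then obtain J a where Ja: "b = (J, a)" "J \<in> Dv M" "a \<le> j" by auto
  have le: "\<And>i. J i \<le> M i" using Ja(2) unfolding Dv_def by blast
  have Jl: "J l = 0" using le[of l] Ml by simp
  have "J(l := a) \<in> Dv (M(l := j))" unfolding Dv_def
  proof (intro CollectI allI)
    fix i show "(J(l := a)) i \<le> (M(l := j)) i" using le[of i] Ja(3) by (cases "i = l") auto
  qed
  then show "(case b of (J, a) \<Rightarrow> J(l := a)) \<in> Dv (M(l := j))" using Ja(1) by simp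
  have "(J(l := a))(l := 0) = J" using Jl by (simp add: fun_eq_iff)
  then show "((case b of (J, a) \<Rightarrow> J(l := a))(l := 0), (case b of (J, a) \<Rightarrow> J(l := a)) l) = b"
    using Ja(1) by simp
qed

definition sl :: "nat \<Rightarrow> ((nat \<Rightarrow> nat) \<Rightarrow> 'a::field) \<Rightarrow> (nat \<Rightarrow> nat) \<Rightarrow> 'a fls" where
  "sl l f M = fps_to_fls (Abs_fps (\<lambda>j. f (M(l := j))))"

lemma fps_to_fls_sum: "fps_to_fls (sum F A) = (\<Sum>a\<in>A. fps_to_fls (F a))"
  by (induction A rule: infinite_finite_induct) auto

lemma Abs_fps_sum: "Abs_fps (\<lambda>j. \<Sum>a\<in>A. X a j) = (\<Sum>a\<in>A. Abs_fps (X a))"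
  by (rule fps_ext) (simp add: fps_sum_nth)

lemma slice_mult_fps:
  fixes f g :: "(nat \<Rightarrow> nat) \<Rightarrow> 'a::field"
  assumes M: "M \<in> Om n l"
  shows "Abs_fps (\<lambda>j. mps_mult f g (M(l := j))) =
    (\<Sum>J\<in>Dv M. Abs_fps (\<lambda>j. f (J(l := j))) * Abs_fps (\<lambda>j. g ((\<lambda>i. M i - J i)(l := j))))"
proof (rule fps_ext)
  fix j
  have Ml: "M l = 0" using M unfolding Om_def by simp
  have fin: "finite (Dv M)" using finite_Dv Om_fs[OF M] by blast
  have "(\<Sum>J\<in>Dv M. Abs_fps (\<lambda>j. f (J(l := j))) * Abs_fps (\<lambda>j. g ((\<lambda>i. M i - J i)(l := j)))) $ j =
     (\<Sum>J\<in>Dv M. \<Sum>a=0..j. f (J(l := a)) * g ((\<lambda>i. M i - J i)(l := j - a)))"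
    by (simp add: fps_sum_nth fps_mult_nth)
  also have "\<dots> = (\<Sum>(J, a)\<in>Sigma (Dv M) (\<lambda>_. {0..j}). f (J(l := a)) * g ((\<lambda>i. M i - J i)(l := j - a)))"
    using fin by (subst sum.Sigma) auto
  also have "\<dots> = (\<Sum>(J, a)\<in>Sigma (Dv M) (\<lambda>_. {0..j}). f (J(l := a)) * g (\<lambda>i. (M(l := j)) i - (J(l := a)) i))"
  proof (intro sum.cong refl, clarify)
    fix J a assume "J \<in> Dv M" "a \<in> {0..j}"
    have "(\<lambda>i. M i - J i)(l := j - a) = (\<lambda>i. (M(l := j)) i - (J(l := a)) i)" by (simp add: fun_eq_iff)
    then show "f (J(l := a)) * g ((\<lambda>i. M i - J i)(l := j - a)) = f (J(l := a)) * g (\<lambda>i. (M(l := j)) i - (J(l := a)) i)"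
      by simp
  qed
  also have "\<dots> = (\<Sum>J'\<in>Dv (M(l := j)). f J' * g (\<lambda>i. (M(l := j)) i - J' i))"
    using slice_reindex[of M l "\<lambda>J'. f J' * g (\<lambda>i. (M(l := j)) i - J' i)" j, OF Ml] by simp
  also have "\<dots> = Abs_fps (\<lambda>j. mps_mult f g (M(l := j))) $ j" by (simp add: mps_mult_Dv)
  finally show "Abs_fps (\<lambda>j. mps_mult f g (M(l := j))) $ j = (\<Sum>J\<in>Dv M. Abs_fps (\<lambda>j. f (J(l := j))) * Abs_fps (\<lambda>j. g ((\<lambda>i. M i - J i)(l := j)))) $ j" by simp
qed

lemma slice_mult:
  fixes f g :: "(nat \<Rightarrow> nat) \<Rightarrow> 'a::field"
  assumes M: "M \<in> Om n l"
  shows "sl l (mps_mult f g) M = (\<Sum>J\<in>Dv M. sl l f J * sl l g (\<lambda>i. M i - J i))"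
  by (simp only: sl_def slice_mult_fps[OF M] fps_to_fls_sum fls_times_fps_to_fls)

lemma Om_Dv: "M \<in> Om n l \<Longrightarrow> J \<in> Dv M \<Longrightarrow> J \<in> Om n l"
proof -
  assume M: "M \<in> Om n l" and J: "J \<in> Dv M"
  have M00: "\<forall>i. (n \<le> i \<or> i = l) \<longrightarrow> M i = 0" using M unfolding Om_def mem_Collect_eq .
  have M0: "\<And>i. n \<le> i \<or> i = l \<Longrightarrow> M i = 0" by (rule M00[rule_format])
  have Jle: "\<And>i. J i \<le> M i" using J unfolding Dv_def by simp
  show ?thesis unfolding Om_def
  proof (rule CollectI, intro allI impI)
    fix i assume "n \<le> i \<or> i = l"
    then show "J i = 0" using M0[of i] Jle[of i] by simp
  qed
qed

lemma Om_diff: "M \<in> Om n l \<Longrightarrow> (\<lambda>i. M i - J i) \<in> Om n l"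
proof -
  assume M: "M \<in> Om n l"
  have M00: "\<forall>i. (n \<le> i \<or> i = l) \<longrightarrow> M i = 0" using M unfolding Om_def mem_Collect_eq .
  have M0: "\<And>i. n \<le> i \<or> i = l \<Longrightarrow> M i = 0" by (rule M00[rule_format])
  show ?thesis unfolding Om_def
  proof (rule CollectI, intro allI impI)
    fix i assume "n \<le> i \<or> i = l"
    then show "M i - J i = 0" using M0[of i] by simp
  qed
qed

lift_definition toM :: "nat \<Rightarrow> nat \<Rightarrow> ((nat \<Rightarrow> nat) \<Rightarrow> 'a::field) \<Rightarrow> 'a fls mps"
  is "\<lambda>n l f N. if N \<in> Om n l then sl l f N else 0"
  using Om_fs by auto

lemma mrep_toM: "mrep (toM n l f) N = (if N \<in> Om n l then sl l f N else 0)"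
  by (simp only: toM.rep_eq)

lemma suppO_toM: "suppO n l (toM n l f)"
  unfolding suppO_def mrep_toM by simp

lemma toM_mult: "toM n l (mps_mult f g) = toM n l f * toM n l g"
proof (rule mps_eqI)
  fix N assume N: "fs N"
  show "mrep (toM n l (mps_mult f g)) N = mrep (toM n l f * toM n l g) N"
  proof (cases "N \<in> Om n l")
    case True
    have "mrep (toM n l f * toM n l g) N = (\<Sum>J\<in>Dv N. mrep (toM n l f) J * mrep (toM n l g) (\<lambda>i. N i - J i))"
      using N by (simp only: mrep_mult if_True)
    also have "\<dots> = (\<Sum>J\<in>Dv N. sl l f J * sl l g (\<lambda>i. N i - J i))"
    proof (rule sum.cong[OF refl])
      fix J assume "J \<in> Dv N"
      then have "J \<in> Om n l" "(\<lambda>i. N i - J i) \<in> Om n l" using Om_Dv[OF True] Om_diff[OF True] by auto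
      then show "mrep (toM n l f) J * mrep (toM n l g) (\<lambda>i. N i - J i) = sl l f J * sl l g (\<lambda>i. N i - J i)"
        by (simp only: mrep_toM if_True)
    qed
    also have "\<dots> = sl l (mps_mult f g) N" by (rule slice_mult[OF True, symmetric])
    also have "\<dots> = mrep (toM n l (mps_mult f g)) N" using True by (simp only: mrep_toM if_True)
    finally show ?thesis by simp
  next
    case False
    have "suppO n l (toM n l f * toM n l g)" by (intro suppO_mult suppO_toM)
    then show ?thesis using False unfolding suppO_def by (simp add: mrep_toM)
  qed
qed

lemma toM_one: "toM n l (\<lambda>I. if I = (\<lambda>_. 0) then 1 else 0) = (1 :: 'a::field fls mps)"
proof (rule mps_eqI)
  fix N :: "nat \<Rightarrow> nat" assume N: "fs N"
  have z: "(\<lambda>_. 0) \<in> Om n l" unfolding Om_def by simp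
  show "mrep (toM n l (\<lambda>I. if I = (\<lambda>_. 0) then 1 else (0::'a))) N = mrep 1 N"
  proof (cases "N \<in> Om n l")
    case True
    then have Nl: "N l = 0" unfolding Om_def by simp
    show ?thesis
    proof (cases "N = (\<lambda>_. 0)")
      case True
      have "Abs_fps (\<lambda>j. if N(l := j) = (\<lambda>_. 0) then 1 else (0::'a)) = 1"
        by (rule fps_ext) (simp add: True fun_eq_iff)
      then show ?thesis using True z by (simp add: mrep_toM mrep_one sl_def)
    next
      case False
      then obtain x where x: "N x \<noteq> 0" by (auto simp: fun_eq_iff)
      then have xl: "x \<noteq> l" using Nl by auto
      have "\<And>j. N(l := j) \<noteq> (\<lambda>_. 0)"
      proof
        fix j assume "N(l := j) = (\<lambda>_. 0)"
        then have "(N(l := j)) x = 0" by simp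
        then show False using x xl by simp
      qed
      then have "Abs_fps (\<lambda>j. if N(l := j) = (\<lambda>_. 0) then 1 else (0::'a)) = 0"
        by (intro fps_ext) simp
      then show ?thesis using False \<open>N \<in> Om n l\<close> by (simp add: mrep_toM mrep_one sl_def)
    qed
  next
    case False
    then have "N \<noteq> (\<lambda>_. 0)" using z by blast
    then show ?thesis using False by (simp add: mrep_toM mrep_one)
  qed
qed

lemma toM_pow: "toM n l (mps_pow f k) = toM n l f ^ k"
  by (induction k) (simp_all add: toM_one toM_mult)

lemma toM_sum: "toM n l (\<lambda>I. \<Sum>k\<in>A. F k I) = (\<Sum>k\<in>A. toM n l (F k))"
proof (rule mps_eqI)
  fix N :: "nat \<Rightarrow> nat"
  show "mrep (toM n l (\<lambda>I. \<Sum>k\<in>A. F k I)) N = mrep (\<Sum>k\<in>A. toM n l (F k)) N"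
    by (simp add: mrep_toM mrep_sum sl_def Abs_fps_sum fps_to_fls_sum)
qed



lemma sr_E: "is_subfield E \<Longrightarrow> sr E"
  unfolding is_subfield_def sr_def by blast

definition L0 :: "'a::field set \<Rightarrow> 'a fls set" where
  "L0 E = {fps_to_fls f | f. \<forall>m. f $ m \<in> E}"

definition KK :: "'a::field set \<Rightarrow> 'a fls set" where
  "KK E = {a / b | a b. a \<in> L0 E \<and> b \<in> L0 E \<and> b \<noteq> 0}"

lemma sr_L0: assumes E: "sr E" shows "sr (L0 E)"
  unfolding sr_def
proof (intro conjI ballI)
  show "0 \<in> L0 E" unfolding L0_def using sr_0[OF E]
    by (intro CollectI exI[of _ 0]) simp
  show "1 \<in> L0 E" unfolding L0_def using sr_0[OF E] sr_1[OF E]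
    by (intro CollectI exI[of _ 1]) simp
  fix x y assume x: "x \<in> L0 E" and y: "y \<in> L0 E"
  obtain f where f: "x = fps_to_fls f" "\<forall>m. f $ m \<in> E" using x L0_def by blast
  obtain g where g: "y = fps_to_fls g" "\<forall>m. g $ m \<in> E" using y L0_def by blast
  show "x + y \<in> L0 E" unfolding L0_def using f g sr_add[OF E]
    by (intro CollectI exI[of _ "f + g"]) simp
  show "x * y \<in> L0 E" unfolding L0_def using f g
    by (intro CollectI exI[of _ "f * g"]) (simp add: fls_times_fps_to_fls fps_mult_nth sr_sum[OF E] sr_mult[OF E])
next
  fix x assume x: "x \<in> L0 E"
  obtain f where f: "x = fps_to_fls f" "\<forall>m. f $ m \<in> E" using x L0_def by blast
  show "- x \<in> L0 E" unfolding L0_def using f sr_uminus[OF E]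
    by (intro CollectI exI[of _ "- f"]) simp
qed

lemma L0_KK: "x \<in> L0 E \<Longrightarrow> sr E \<Longrightarrow> x \<in> KK E"
  unfolding KK_def using sr_1[OF sr_L0] by (intro CollectI exI[of _ x] exI[of _ 1]) auto

lemma sf_KK: assumes E: "sr E" shows "sf (KK E)"
proof -
  have L: "sr (L0 E)" using sr_L0[OF E] .
  have "sr (KK E)" unfolding sr_def
  proof (intro conjI ballI)
    show "0 \<in> KK E" using L0_KK[OF sr_0[OF L] E] .
    show "1 \<in> KK E" using L0_KK[OF sr_1[OF L] E] .
    fix x y assume x: "x \<in> KK E" and y: "y \<in> KK E"
    obtain a b where ab: "x = a / b" "a \<in> L0 E" "b \<in> L0 E" "b \<noteq> 0" using x KK_def by blast
    obtain c d where cd: "y = c / d" "c \<in> L0 E" "d \<in> L0 E" "d \<noteq> 0" using y KK_def by blast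
    have "x + y = (a * d + c * b) / (b * d)" using ab cd by (simp add: field_simps)
    then show "x + y \<in> KK E" unfolding KK_def using ab cd L
      by (intro CollectI exI[of _ "a * d + c * b"] exI[of _ "b * d"]) (simp add: sr_add sr_mult)
    have "x * y = (a * c) / (b * d)" using ab cd by simp
    then show "x * y \<in> KK E" unfolding KK_def using ab cd L
      by (intro CollectI exI[of _ "a * c"] exI[of _ "b * d"]) (simp add: sr_mult)
  next
    fix x assume x: "x \<in> KK E"
    obtain a b where ab: "x = a / b" "a \<in> L0 E" "b \<in> L0 E" "b \<noteq> 0" using x KK_def by blast
    have "- x = (- a) / b" using ab by simp
    then show "- x \<in> KK E" unfolding KK_def using ab L
      by (intro CollectI exI[of _ "- a"] exI[of _ b]) (simp add: sr_uminus)
  qed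
  moreover have "\<forall>x\<in>KK E. inverse x \<in> KK E"
  proof
    fix x assume x: "x \<in> KK E"
    obtain a b where ab: "x = a / b" "a \<in> L0 E" "b \<in> L0 E" "b \<noteq> 0" using x KK_def by blast
    show "inverse x \<in> KK E"
    proof (cases "a = 0")
      case True then show ?thesis using ab \<open>sr (KK E)\<close> by (simp add: sr_0)
    next
      case False
      have "inverse x = b / a" using ab by simp
      then show ?thesis unfolding KK_def using ab False by blast
    qed
  qed
  ultimately show ?thesis unfolding sf_def by blast
qed

lemma sr_fin: assumes "sr K" shows "sr {z. fin K z}"
  unfolding sr_def using assms
  by (auto intro: fin_K fin_add fin_mult fin_uminus sr_0 sr_1)

lemma rc_fin: assumes "sf K" shows "rc {z. fin K z}"
  unfolding rc_def using fin_root[OF assms] by blast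

lemma alg_KK:
  assumes E: "sr E" and a: "alg (KK E) z"
  shows "\<exists>p. p \<noteq> 0 \<and> (\<forall>k m. fls_nth (coeff p k) m \<in> E) \<and> poly p z = 0"
proof -
  have L: "sr (L0 E)" using sr_L0[OF E] .
  obtain p where p: "p \<noteq> 0" "\<forall>i. coeff p i \<in> KK E" "poly p z = 0" using a alg_def by blast
  have "\<forall>i. \<exists>a b. a \<in> L0 E \<and> b \<in> L0 E \<and> b \<noteq> 0 \<and> coeff p i = a / b" using p(2) KK_def by blast
  then obtain na nb where nab: "\<And>i. na i \<in> L0 E \<and> nb i \<in> L0 E \<and> nb i \<noteq> 0 \<and> coeff p i = na i / nb i"
    by metis
  define D where "D = degree p"
  define B where "B = (\<Prod>i\<le>D. nb i)"
  have B0: "B \<noteq> 0" unfolding B_def using nab by simp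
  define q where "q = smult B p"
  have "q \<noteq> 0" using B0 p(1) q_def by simp
  moreover have "poly q z = 0" using p(3) q_def by simp
  moreover have qL: "coeff q i \<in> L0 E" for i
  proof (cases "i \<le> D")
    case True
    have "B = nb i * (\<Prod>j\<in>{..D} - {i}. nb j)" unfolding B_def using True
      by (subst prod.remove[of _ i]) auto
    then have "coeff q i = na i * (\<Prod>j\<in>{..D} - {i}. nb j)"
      unfolding q_def using nab[of i] by simp
    then show ?thesis using nab L by (simp add: sr_mult sr_prod)
  next
    case False
    then have "coeff p i = 0" unfolding D_def by (simp add: coeff_eq_0)
    then show ?thesis unfolding q_def using sr_0[OF L] by simp
  qed
  moreover have "\<forall>k m. fls_nth (coeff q k) m \<in> E"
  proof (intro allI)
    fix k m
    obtain f where f: "coeff q k = fps_to_fls f" "\<forall>m. f $ m \<in> E" using qL[of k] L0_def by blast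
    show "fls_nth (coeff q k) m \<in> E" using f sr_0[OF E] by simp
  qed
  ultimately show ?thesis by blast
qed



lemma Om_upd_exps:
  assumes N: "N \<in> Om n l" and l: "l < n"
  shows "N(l := j) \<in> exps n"
proof -
  have N0: "\<forall>i. (n \<le> i \<or> i = l) \<longrightarrow> N i = 0" using N unfolding Om_def mem_Collect_eq .
  show ?thesis unfolding exps_def
  proof (rule CollectI, intro allI impI)
    fix i assume i: "n \<le> i"
    then have "i \<noteq> l" using l by simp
    then show "(N(l := j)) i = 0" using N0 i by simp
  qed
qed

lemma exps_Om:
  assumes I: "I \<in> exps n"
  shows "I(l := 0) \<in> Om n l"
proof -
  have I0: "\<forall>i\<ge>n. I i = 0" using I unfolding exps_def mem_Collect_eq .
  show ?thesis unfolding Om_def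
  proof (rule CollectI, intro allI impI)
    fix i assume i: "n \<le> i \<or> i = l"
    show "(I(l := 0)) i = 0"
    proof (cases "i = l")
      case True then show ?thesis by simp
    next
      case False then have "n \<le> i" using i by simp
      then show ?thesis using I0 False by simp
    qed
  qed
qed

theorem lemma3p1:
  fixes E :: "'a::field set" and n :: nat and \<sigma> :: "(nat \<Rightarrow> nat) \<Rightarrow> 'a"
  assumes "is_subfield E"
    and "mps_algebraic_over E n \<sigma>"
  shows "\<forall>l<n. \<forall>I\<in>exps n. fps_algebraic_over E (Abs_fps (\<lambda>j. \<sigma> (I(l := j))))"
proof (intro allI impI ballI)
  fix l I assume l: "l < n" and I: "I \<in> exps n"
  have E: "sr E" using sr_E[OF assms(1)] .
  obtain c d where c1: "\<forall>k\<le>d. \<forall>I\<in>exps n. c k I \<in> E"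
    and c2: "\<exists>k\<le>d. \<exists>I\<in>exps n. c k I \<noteq> 0"
    and c3: "\<forall>I\<in>exps n. (\<Sum>k\<le>d. mps_mult (c k) (mps_pow \<sigma> k) I) = 0"
    using assms(2) unfolding mps_algebraic_over_def by blast
  define K where "K = KK E"
  define R where "R = {z. fin K z}"
  have K: "sf K" unfolding K_def using sf_KK[OF E] .
  have Kr: "sr K" using K sf_def by blast
  have R1: "sr R" unfolding R_def using sr_fin[OF Kr] .
  have R2: "rc R" unfolding R_def using rc_fin[OF K] .
  have L0R: "x \<in> R" if "x \<in> L0 E" for x
    unfolding R_def K_def using fin_K[OF Kr] L0_KK[OF that E] K_def by blast
  define S where "S = toM n l \<sigma>"
  define P where "P = (\<Sum>k\<le>d. monom (toM n l (c k)) k)"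
  have zero: "toM n l (\<lambda>I. \<Sum>k\<le>d. mps_mult (c k) (mps_pow \<sigma> k) I) = 0"
  proof (rule mps_eqI)
    fix N :: "nat \<Rightarrow> nat"
    show "mrep (toM n l (\<lambda>I. \<Sum>k\<le>d. mps_mult (c k) (mps_pow \<sigma> k) I)) N = mrep 0 N"
    proof (cases "N \<in> Om n l")
      case True
      have "Abs_fps (\<lambda>j. \<Sum>k\<le>d. mps_mult (c k) (mps_pow \<sigma> k) (N(l := j))) = 0"
        by (rule fps_ext) (simp add: c3 Om_upd_exps[OF True l])
      then show ?thesis using True by (simp add: mrep_toM sl_def mrep_zero)
    next
      case False then show ?thesis by (simp add: mrep_toM mrep_zero)
    qed
  qed
  have "poly P S = (\<Sum>k\<le>d. toM n l (c k) * S ^ k)"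
    unfolding P_def by (simp add: poly_sum poly_monom)
  also have "\<dots> = toM n l (\<lambda>I. \<Sum>k\<le>d. mps_mult (c k) (mps_pow \<sigma> k) I)"
    unfolding S_def by (simp add: toM_sum toM_mult toM_pow)
  finally have PS: "poly P S = 0" using zero by simp
  have cP: "coeff P i = (if i \<le> d then toM n l (c i) else 0)" for i
  proof -
    have "coeff P i = (\<Sum>k\<le>d. if k = i then toM n l (c k) else 0)"
      unfolding P_def by (simp add: coeff_sum coeff_monom)
    also have "\<dots> = (if i \<le> d then toM n l (c i) else 0)" by (simp add: sum.delta)
    finally show ?thesis .
  qed
  have P0: "P \<noteq> 0"
  proof -
    obtain k0 I0 where k0: "k0 \<le> d" "I0 \<in> exps n" "c k0 I0 \<noteq> 0" using c2 by blast
    define N0 where "N0 = I0(l := 0)"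
    have N0O: "N0 \<in> Om n l" unfolding N0_def using exps_Om[OF k0(2)] .
    have "fls_nth (mrep (toM n l (c k0)) N0) (int (I0 l)) = c k0 (N0(l := I0 l))"
      using N0O by (simp add: mrep_toM sl_def)
    also have "N0(l := I0 l) = I0" unfolding N0_def by simp
    finally have "mrep (toM n l (c k0)) N0 \<noteq> 0" using k0(3) by auto
    then have "toM n l (c k0) \<noteq> 0" by (auto simp: mrep_zero)
    then have "coeff P k0 \<noteq> 0" using cP k0(1) by simp
    then show ?thesis by auto
  qed
  have PR: "\<forall>i. coeff P i \<in> Rm n l R"
  proof
    fix i
    show "coeff P i \<in> Rm n l R"
    proof (cases "i \<le> d")
      case False then show ?thesis using cP sr_0[OF sr_Rm[OF R1]] by simp
    next
      case True
      have "mrep (toM n l (c i)) N \<in> R" for N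
      proof (cases "N \<in> Om n l")
        case NO: True
        have "sl l (c i) N \<in> L0 E" unfolding sl_def L0_def
          using c1 True Om_upd_exps[OF NO l] by (intro CollectI exI[of _ "Abs_fps (\<lambda>j. c i (N(l := j)))"]) simp
        then show ?thesis using NO L0R by (simp add: mrep_toM)
      next
        case False then show ?thesis using sr_0[OF R1] by (simp add: mrep_toM)
      qed
      then show ?thesis using True cP suppO_toM unfolding Rm_def by simp
    qed
  qed
  have "mrep S (I(l := 0)) \<in> R"
    using tower[OF R1 R2 P0 PR _ PS] suppO_toM S_def by blast
  moreover have "mrep S (I(l := 0)) = fps_to_fls (Abs_fps (\<lambda>j. \<sigma> (I(l := j))))"
    using exps_Om[OF I, of l] unfolding S_def by (simp add: mrep_toM sl_def)
  ultimately have "fin K (fps_to_fls (Abs_fps (\<lambda>j. \<sigma> (I(l := j)))))" unfolding R_def by simp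
  then have "alg K (fps_to_fls (Abs_fps (\<lambda>j. \<sigma> (I(l := j)))))" using fin_alg[OF Kr] by blast
  then show "fps_algebraic_over E (Abs_fps (\<lambda>j. \<sigma> (I(l := j))))"
    unfolding fps_algebraic_over_def using alg_KK[OF E] K_def by blast
qed

end
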